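(* Let $k$ be an algebraically closed field of characteristic $p>0$ and $H$ a finite-dimensional cocommutative connected Hopf algebra over $k$. Then every term $\Gamma^n(H)$, $n\ge0$, of the upper power series of $H$ is a normal Hopf subalgebra of $H$.
   Context: Connected: the coradical (sum of simple subcoalgebras) is one-dimensional. Coradical filtration: $H_n=\Delta^{-1}(H\otimes H_{n-1}+H_0\otimes H)$. Upper power series: $\Gamma^0(H)=k$, and for $n\ge1$ $\Gamma^n(H)$ is the subalgebra of $H$ generated by $H_{p^{n-1}}$. A Hopf subalgebra $K\subseteq H$ is normal if $\sum S(h_1)kh_2\in K$ and $\sum h_1kS(h_2)\in K$ for all $k\in K,h\in H$. *)

theory Defs
  imports "HOL-Computational_Algebra.Polynomial"
begin

(* A finite-dimensional Hopf algebra over a field 'k, presented by structure constants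
   with respect to a basis e_0, ..., e_{d-1}.  Elements of H are coefficient vectors
   nat => 'k supported on {0..<d}; elements of H (x) H are coefficient arrays
   nat x nat => 'k supported on {0..<d} x {0..<d}.
   mu i j l   : coefficient of e_l in e_i e_j
   unit       : the unit element 1_H
   delta l i j: coefficient of e_i (x) e_j in Delta(e_l)
   eps l      : counit of e_l
   anti l j   : coefficient of e_j in S(e_l)                                   *)
record 'k hopf =
  dim   :: nat
  mu    :: "nat \<Rightarrow> nat \<Rightarrow> nat \<Rightarrow> 'k"
  unit  :: "nat \<Rightarrow> 'k"
  delta :: "nat \<Rightarrow> nat \<Rightarrow> nat \<Rightarrow> 'k"
  eps   :: "nat \<Rightarrow> 'k"
  anti  :: "nat \<Rightarrow> nat \<Rightarrow> 'k"

definition zv :: "'a \<Rightarrow> 'k::field" where "zv = (\<lambda>_. 0)"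
definition addv :: "('a \<Rightarrow> 'k::field) \<Rightarrow> ('a \<Rightarrow> 'k) \<Rightarrow> 'a \<Rightarrow> 'k"
  where "addv v w = (\<lambda>x. v x + w x)"
definition smul :: "'k::field \<Rightarrow> ('a \<Rightarrow> 'k) \<Rightarrow> 'a \<Rightarrow> 'k"
  where "smul c v = (\<lambda>x. c * v x)"
definition vsum :: "('i \<Rightarrow> 'a \<Rightarrow> 'k::field) \<Rightarrow> 'i set \<Rightarrow> 'a \<Rightarrow> 'k"
  where "vsum f I = (\<lambda>x. \<Sum>i\<in>I. f i x)"

inductive_set kspan :: "('a \<Rightarrow> 'k::field) set \<Rightarrow> ('a \<Rightarrow> 'k) set" for S where
  kspan_zero: "zv \<in> kspan S"
| kspan_base: "v \<in> S \<Longrightarrow> v \<in> kspan S"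
| kspan_add: "v \<in> kspan S \<Longrightarrow> w \<in> kspan S \<Longrightarrow> addv v w \<in> kspan S"
| kspan_smul: "v \<in> kspan S \<Longrightarrow> smul c v \<in> kspan S"

definition vecs :: "'k::field hopf \<Rightarrow> (nat \<Rightarrow> 'k) set"
  where "vecs H = {v. \<forall>i\<ge>dim H. v i = 0}"

definition bvec :: "nat \<Rightarrow> nat \<Rightarrow> 'k::field"
  where "bvec i = (\<lambda>j. if j = i then 1 else 0)"

definition tens_prod :: "(nat \<Rightarrow> 'k::field) \<Rightarrow> (nat \<Rightarrow> 'k) \<Rightarrow> nat \<times> nat \<Rightarrow> 'k"
  where "tens_prod v w = (\<lambda>(i, j). v i * w j)"

definition hmult :: "'k::field hopf \<Rightarrow> (nat \<Rightarrow> 'k) \<Rightarrow> (nat \<Rightarrow> 'k) \<Rightarrow> nat \<Rightarrow> 'k" where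
  "hmult H v w = (\<lambda>l. if l < dim H then
      (\<Sum>i<dim H. \<Sum>j<dim H. v i * w j * mu H i j l) else 0)"

definition hcomult :: "'k::field hopf \<Rightarrow> (nat \<Rightarrow> 'k) \<Rightarrow> nat \<times> nat \<Rightarrow> 'k" where
  "hcomult H v = (\<lambda>(i, j). if i < dim H \<and> j < dim H then
      (\<Sum>l<dim H. v l * delta H l i j) else 0)"

definition hcounit :: "'k::field hopf \<Rightarrow> (nat \<Rightarrow> 'k) \<Rightarrow> 'k" where
  "hcounit H v = (\<Sum>l<dim H. v l * eps H l)"

definition hanti :: "'k::field hopf \<Rightarrow> (nat \<Rightarrow> 'k) \<Rightarrow> nat \<Rightarrow> 'k" where
  "hanti H v = (\<lambda>j. if j < dim H then (\<Sum>l<dim H. v l * anti H l j) else 0)"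

(* multiplication on H (x) H:  (a (x) b)(c (x) d) = ac (x) bd *)
definition tmult :: "'k::field hopf \<Rightarrow> (nat \<times> nat \<Rightarrow> 'k) \<Rightarrow> (nat \<times> nat \<Rightarrow> 'k) \<Rightarrow> nat \<times> nat \<Rightarrow> 'k" where
  "tmult H s t = (\<lambda>(a, b). \<Sum>i1<dim H. \<Sum>j1<dim H. \<Sum>i2<dim H. \<Sum>j2<dim H.
       s (i1, j1) * t (i2, j2) * hmult H (bvec i1) (bvec i2) a * hmult H (bvec j1) (bvec j2) b)"

definition hopf_algebra :: "'k::field hopf \<Rightarrow> bool" where
  "hopf_algebra H \<longleftrightarrow>
     unit H \<in> vecs H
   \<comment> \<open>associativity and unit\<close>
   \<and> (\<forall>v\<in>vecs H. \<forall>w\<in>vecs H. \<forall>x\<in>vecs H. hmult H (hmult H v w) x = hmult H v (hmult H w x))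
   \<and> (\<forall>v\<in>vecs H. hmult H (unit H) v = v \<and> hmult H v (unit H) = v)
   \<comment> \<open>coassociativity: (Delta (x) id) Delta = (id (x) Delta) Delta\<close>
   \<and> (\<forall>v\<in>vecs H.
        (\<lambda>(a, b, c). \<Sum>i<dim H. hcomult H v (i, c) * hcomult H (bvec i) (a, b))
      = (\<lambda>(a, b, c). \<Sum>j<dim H. hcomult H v (a, j) * hcomult H (bvec j) (b, c)))
   \<comment> \<open>counit: (eps (x) id) Delta = id = (id (x) eps) Delta\<close>
   \<and> (\<forall>v\<in>vecs H.
        (\<lambda>a. \<Sum>i<dim H. hcounit H (bvec i) * hcomult H v (i, a)) = v
      \<and> (\<lambda>a. \<Sum>j<dim H. hcomult H v (a, j) * hcounit H (bvec j)) = v)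
   \<comment> \<open>Delta and eps are algebra maps\<close>
   \<and> (\<forall>v\<in>vecs H. \<forall>w\<in>vecs H.
        hcomult H (hmult H v w) = tmult H (hcomult H v) (hcomult H w))
   \<and> hcomult H (unit H) = tens_prod (unit H) (unit H)
   \<and> (\<forall>v\<in>vecs H. \<forall>w\<in>vecs H. hcounit H (hmult H v w) = hcounit H v * hcounit H w)
   \<and> hcounit H (unit H) = 1
   \<comment> \<open>antipode: m (S (x) id) Delta = u eps = m (id (x) S) Delta\<close>
   \<and> (\<forall>v\<in>vecs H.
        vsum (\<lambda>(i, j). smul (hcomult H v (i, j)) (hmult H (hanti H (bvec i)) (bvec j)))
             ({..<dim H} \<times> {..<dim H}) = smul (hcounit H v) (unit H)
      \<and> vsum (\<lambda>(i, j). smul (hcomult H v (i, j)) (hmult H (bvec i) (hanti H (bvec j))))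
             ({..<dim H} \<times> {..<dim H}) = smul (hcounit H v) (unit H))"

definition cocommutative :: "'k::field hopf \<Rightarrow> bool" where
  "cocommutative H \<longleftrightarrow> (\<forall>v\<in>vecs H. \<forall>i j. hcomult H v (i, j) = hcomult H v (j, i))"

definition subspace_of :: "'k::field hopf \<Rightarrow> (nat \<Rightarrow> 'k) set \<Rightarrow> bool" where
  "subspace_of H W \<longleftrightarrow> W \<subseteq> vecs H \<and> zv \<in> W
     \<and> (\<forall>v\<in>W. \<forall>w\<in>W. addv v w \<in> W) \<and> (\<forall>c. \<forall>v\<in>W. smul c v \<in> W)"

definition tens_sp :: "(nat \<Rightarrow> 'k::field) set \<Rightarrow> (nat \<Rightarrow> 'k) set \<Rightarrow> (nat \<times> nat \<Rightarrow> 'k) set" where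
  "tens_sp A B = kspan {tens_prod a b | a b. a \<in> A \<and> b \<in> B}"

definition sum_sp :: "('a \<Rightarrow> 'k::field) set \<Rightarrow> ('a \<Rightarrow> 'k) set \<Rightarrow> ('a \<Rightarrow> 'k) set" where
  "sum_sp A B = {addv a b | a b. a \<in> A \<and> b \<in> B}"

definition subcoalgebra :: "'k::field hopf \<Rightarrow> (nat \<Rightarrow> 'k) set \<Rightarrow> bool" where
  "subcoalgebra H W \<longleftrightarrow> subspace_of H W \<and> hcomult H ` W \<subseteq> tens_sp W W"

definition simple_subcoalgebra :: "'k::field hopf \<Rightarrow> (nat \<Rightarrow> 'k) set \<Rightarrow> bool" where
  "simple_subcoalgebra H W \<longleftrightarrow> subcoalgebra H W \<and> W \<noteq> {zv}
     \<and> (\<forall>W'. subcoalgebra H W' \<and> W' \<subseteq> W \<longrightarrow> W' = {zv} \<or> W' = W)"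

definition coradical :: "'k::field hopf \<Rightarrow> (nat \<Rightarrow> 'k) set" where
  "coradical H = kspan (\<Union>{W. simple_subcoalgebra H W})"

definition connected_hopf :: "'k::field hopf \<Rightarrow> bool" where
  "connected_hopf H \<longleftrightarrow> (\<exists>v. v \<noteq> zv \<and> coradical H = {smul c v | c. True})"

fun corad_filt :: "'k::field hopf \<Rightarrow> nat \<Rightarrow> (nat \<Rightarrow> 'k) set" where
  "corad_filt H 0 = coradical H"
| "corad_filt H (Suc n) = {v \<in> vecs H. hcomult H v \<in>
      sum_sp (tens_sp (vecs H) (corad_filt H n)) (tens_sp (coradical H) (vecs H))}"

definition subalgebra_of :: "'k::field hopf \<Rightarrow> (nat \<Rightarrow> 'k) set \<Rightarrow> bool" where
  "subalgebra_of H A \<longleftrightarrow> subspace_of H A \<and> unit H \<in> A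
     \<and> (\<forall>v\<in>A. \<forall>w\<in>A. hmult H v w \<in> A)"

definition gen_subalg :: "'k::field hopf \<Rightarrow> (nat \<Rightarrow> 'k) set \<Rightarrow> (nat \<Rightarrow> 'k) set" where
  "gen_subalg H S = \<Inter>{A. subalgebra_of H A \<and> S \<subseteq> A}"

definition upper_power :: "'k::field hopf \<Rightarrow> nat \<Rightarrow> (nat \<Rightarrow> 'k) set" where
  "upper_power H n = (if n = 0 then kspan {unit H}
      else gen_subalg H (corad_filt H (CHAR('k) ^ (n - 1))))"

definition hopf_subalgebra :: "'k::field hopf \<Rightarrow> (nat \<Rightarrow> 'k) set \<Rightarrow> bool" where
  "hopf_subalgebra H K \<longleftrightarrow> subalgebra_of H K \<and> hcomult H ` K \<subseteq> tens_sp K K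
     \<and> hanti H ` K \<subseteq> K"

definition normal_hopf_subalgebra :: "'k::field hopf \<Rightarrow> (nat \<Rightarrow> 'k) set \<Rightarrow> bool" where
  "normal_hopf_subalgebra H K \<longleftrightarrow> hopf_subalgebra H K
     \<and> (\<forall>k\<in>K. \<forall>h\<in>vecs H.
          vsum (\<lambda>(i, j). smul (hcomult H h (i, j)) (hmult H (hanti H (bvec i)) (hmult H k (bvec j))))
               ({..<dim H} \<times> {..<dim H}) \<in> K
        \<and> vsum (\<lambda>(i, j). smul (hcomult H h (i, j)) (hmult H (bvec i) (hmult H k (hanti H (bvec j)))))
               ({..<dim H} \<times> {..<dim H}) \<in> K)"

end

theory Submission
  imports Defs
begin


lemma sum_ifP: "(\<Sum>j\<in>A. if P then f j else (0::'a::comm_monoid_add)) = (if P then (\<Sum>j\<in>A. f j) else 0)" by simp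

lemma sum_perm_a: "(\<Sum>i\<in>A. \<Sum>j\<in>B. \<Sum>a\<in>C. \<Sum>b\<in>D. f i j a b) = (\<Sum>a\<in>C. \<Sum>b\<in>D. \<Sum>j\<in>B. \<Sum>i\<in>A. f i j a b)"
proof -
  have "(\<Sum>i\<in>A. \<Sum>j\<in>B. \<Sum>a\<in>C. \<Sum>b\<in>D. f i j a b) = (\<Sum>j\<in>B. \<Sum>i\<in>A. \<Sum>a\<in>C. \<Sum>b\<in>D. f i j a b)"
    by (rule sum.swap)
  also have "\<dots> = (\<Sum>j\<in>B. \<Sum>a\<in>C. \<Sum>b\<in>D. \<Sum>i\<in>A. f i j a b)"
    apply (rule sum.cong, simp)
    apply (rule trans[OF sum.swap])
    apply (rule sum.cong, simp)
    apply (rule trans[OF sum.swap]) by simp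
  also have "\<dots> = (\<Sum>a\<in>C. \<Sum>b\<in>D. \<Sum>j\<in>B. \<Sum>i\<in>A. f i j a b)"
    apply (rule trans[OF sum.swap])
    apply (rule sum.cong, simp)
    apply (rule trans[OF sum.swap]) by simp
  finally show ?thesis .
qed

lemma sum_perm_c: "(\<Sum>i\<in>A. \<Sum>j\<in>B. \<Sum>a\<in>C. \<Sum>b\<in>D. f i j a b) = (\<Sum>a\<in>C. \<Sum>b\<in>D. \<Sum>i\<in>A. \<Sum>j\<in>B. f i j a b)"
  apply (subst sum_perm_a)
  apply (rule sum.cong, simp)+
  by (rule sum.swap)

lemma sum_perm3: "(\<Sum>a\<in>A. \<Sum>b\<in>B. \<Sum>c\<in>C. f a b c) = (\<Sum>c\<in>C. \<Sum>a\<in>A. \<Sum>b\<in>B. f a b c)"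
  apply (rule trans[OF sum.cong[OF refl sum.swap]])
  by (rule sum.swap)

locale coalg =
  fixes I :: "'i set" and Dc :: "'i \<Rightarrow> 'i \<Rightarrow> 'i \<Rightarrow> 'k::field" and ec :: "'i \<Rightarrow> 'k"
  assumes finI: "finite I"
  and coass: "\<lbrakk>l\<in>I; a\<in>I; b\<in>I; c\<in>I\<rbrakk> \<Longrightarrow> (\<Sum>i\<in>I. Dc l i c * Dc i a b) = (\<Sum>j\<in>I. Dc l a j * Dc j b c)"
  and counitL: "\<lbrakk>l\<in>I; a\<in>I\<rbrakk> \<Longrightarrow> (\<Sum>i\<in>I. ec i * Dc l i a) = (if l = a then 1 else 0)"
  and counitR: "\<lbrakk>l\<in>I; a\<in>I\<rbrakk> \<Longrightarrow> (\<Sum>j\<in>I. Dc l a j * ec j) = (if l = a then 1 else 0)"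
begin
lemma coass_lift:
  assumes "l \<in> I"
  shows "(\<Sum>i\<in>I. \<Sum>j\<in>I. Dc l i j * (\<Sum>a\<in>I. \<Sum>b\<in>I. Dc i a b * X a b j))
       = (\<Sum>a\<in>I. \<Sum>k\<in>I. Dc l a k * (\<Sum>b\<in>I. \<Sum>j\<in>I. Dc k b j * X a b j))"
proof -
  have "(\<Sum>i\<in>I. \<Sum>j\<in>I. Dc l i j * (\<Sum>a\<in>I. \<Sum>b\<in>I. Dc i a b * X a b j))
      = (\<Sum>i\<in>I. \<Sum>j\<in>I. \<Sum>a\<in>I. \<Sum>b\<in>I. Dc l i j * Dc i a b * X a b j)"
    by (simp add: sum_distrib_left mult.assoc)
  also have "\<dots> = (\<Sum>a\<in>I. \<Sum>b\<in>I. \<Sum>j\<in>I. \<Sum>i\<in>I. Dc l i j * Dc i a b * X a b j)"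
    by (rule sum_perm_a)
  also have "\<dots> = (\<Sum>a\<in>I. \<Sum>b\<in>I. \<Sum>j\<in>I. (\<Sum>i\<in>I. Dc l i j * Dc i a b) * X a b j)"
    by (simp add: sum_distrib_right)
  also have "\<dots> = (\<Sum>a\<in>I. \<Sum>b\<in>I. \<Sum>j\<in>I. (\<Sum>k\<in>I. Dc l a k * Dc k b j) * X a b j)"
    using assms by (simp add: coass)
  also have "\<dots> = (\<Sum>a\<in>I. \<Sum>b\<in>I. \<Sum>j\<in>I. \<Sum>k\<in>I. Dc l a k * (Dc k b j * X a b j))"
    by (simp add: sum_distrib_right mult.assoc)
  also have "\<dots> = (\<Sum>a\<in>I. \<Sum>k\<in>I. \<Sum>b\<in>I. \<Sum>j\<in>I. Dc l a k * (Dc k b j * X a b j))"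
    by (rule sum.cong[OF refl], rule sum_perm3)
  also have "\<dots> = (\<Sum>a\<in>I. \<Sum>k\<in>I. Dc l a k * (\<Sum>b\<in>I. \<Sum>j\<in>I. Dc k b j * X a b j))"
    by (simp add: sum_distrib_left)
  finally show ?thesis .
qed

lemma counit_lift: "l \<in> I \<Longrightarrow> (\<Sum>i\<in>I. \<Sum>j\<in>I. Dc l i j * (ec i * F j)) = F l"
proof -
  assume l: "l \<in> I"
  have "(\<Sum>i\<in>I. \<Sum>j\<in>I. Dc l i j * (ec i * F j)) = (\<Sum>j\<in>I. (\<Sum>i\<in>I. ec i * Dc l i j) * F j)"
    by (subst sum.swap) (simp add: sum_distrib_left sum_distrib_right mult_ac)
  also have "\<dots> = (\<Sum>j\<in>I. (if l = j then F j else 0))"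
    using l by (intro sum.cong) (auto simp: counitL)
  finally show ?thesis using l finI by simp
qed

lemma counit_liftR: "l \<in> I \<Longrightarrow> (\<Sum>i\<in>I. \<Sum>j\<in>I. Dc l i j * (F i * ec j)) = F l"
proof -
  assume l: "l \<in> I"
  have "(\<Sum>i\<in>I. \<Sum>j\<in>I. Dc l i j * (F i * ec j)) = (\<Sum>i\<in>I. (\<Sum>j\<in>I. Dc l i j * ec j) * F i)"
    by (simp add: sum_distrib_left sum_distrib_right mult_ac)
  also have "\<dots> = (\<Sum>i\<in>I. (if l = i then F i else 0))"
    using l by (intro sum.cong) (auto simp: counitR)
  finally show ?thesis using l finI by simp
qed
end

locale alg =
  fixes J :: "'j set" and Ma :: "'j \<Rightarrow> 'j \<Rightarrow> 'j \<Rightarrow> 'k::field" and ua :: "'j \<Rightarrow> 'k"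
  assumes finJ: "finite J"
  and assoc: "\<lbrakk>i\<in>J; j\<in>J; k\<in>J; s\<in>J\<rbrakk> \<Longrightarrow> (\<Sum>r\<in>J. Ma i j r * Ma r k s) = (\<Sum>r\<in>J. Ma j k r * Ma i r s)"
  and unitL: "\<lbrakk>j\<in>J; s\<in>J\<rbrakk> \<Longrightarrow> (\<Sum>r\<in>J. ua r * Ma r j s) = (if j = s then 1 else 0)"
  and unitR: "\<lbrakk>j\<in>J; s\<in>J\<rbrakk> \<Longrightarrow> (\<Sum>r\<in>J. ua r * Ma j r s) = (if j = s then 1 else 0)"
begin
definition P where "P v w t = (\<Sum>x\<in>J. \<Sum>y\<in>J. v x * w y * Ma x y t)"

lemma P_assoc: assumes t: "t \<in> J" shows "P (P a b) c t = P a (P b c) t"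
proof -
  have "P (P a b) c t = (\<Sum>x\<in>J. \<Sum>y\<in>J. \<Sum>x'\<in>J. \<Sum>y'\<in>J. a x' * b y' * c y * (Ma x' y' x * Ma x y t))"
    unfolding P_def by (simp add: sum_distrib_left sum_distrib_right mult_ac)
  also have "\<dots> = (\<Sum>x'\<in>J. \<Sum>y'\<in>J. \<Sum>y\<in>J. \<Sum>x\<in>J. a x' * b y' * c y * (Ma x' y' x * Ma x y t))"
    by (rule sum_perm_a)
  also have "\<dots> = (\<Sum>x'\<in>J. \<Sum>y'\<in>J. \<Sum>y\<in>J. a x' * b y' * c y * (\<Sum>x\<in>J. Ma x' y' x * Ma x y t))"
    by (simp add: sum_distrib_left)
  also have "\<dots> = (\<Sum>x'\<in>J. \<Sum>y'\<in>J. \<Sum>y\<in>J. a x' * b y' * c y * (\<Sum>z\<in>J. Ma y' y z * Ma x' z t))"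
    using t by (simp add: assoc)
  also have "\<dots> = (\<Sum>x'\<in>J. \<Sum>y'\<in>J. \<Sum>y\<in>J. \<Sum>z\<in>J. a x' * b y' * c y * (Ma y' y z * Ma x' z t))"
    by (simp add: sum_distrib_left)
  also have "\<dots> = (\<Sum>x'\<in>J. \<Sum>z\<in>J. \<Sum>y'\<in>J. \<Sum>y\<in>J. a x' * b y' * c y * (Ma y' y z * Ma x' z t))"
    by (rule sum.cong[OF refl], rule sum_perm3)
  also have "\<dots> = P a (P b c) t"
    unfolding P_def by (simp add: sum_distrib_left sum_distrib_right mult_ac)
  finally show ?thesis .
qed

lemma P_linL2: "P (\<lambda>x. \<Sum>a\<in>A. \<Sum>b\<in>B. c a b * v a b x) w t = (\<Sum>a\<in>A. \<Sum>b\<in>B. c a b * P (v a b) w t)"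
proof -
  have "P (\<lambda>x. \<Sum>a\<in>A. \<Sum>b\<in>B. c a b * v a b x) w t = (\<Sum>x\<in>J. \<Sum>y\<in>J. \<Sum>a\<in>A. \<Sum>b\<in>B. c a b * (v a b x * w y * Ma x y t))"
    unfolding P_def by (simp add: sum_distrib_left sum_distrib_right mult_ac)
  also have "\<dots> = (\<Sum>a\<in>A. \<Sum>b\<in>B. \<Sum>x\<in>J. \<Sum>y\<in>J. c a b * (v a b x * w y * Ma x y t))"
    by (rule sum_perm_c)
  also have "\<dots> = (\<Sum>a\<in>A. \<Sum>b\<in>B. c a b * P (v a b) w t)"
    unfolding P_def by (simp add: sum_distrib_left)
  finally show ?thesis .
qed

lemma P_linR2: "P w (\<lambda>x. \<Sum>a\<in>A. \<Sum>b\<in>B. c a b * v a b x) t = (\<Sum>a\<in>A. \<Sum>b\<in>B. c a b * P w (v a b) t)"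
proof -
  have "P w (\<lambda>x. \<Sum>a\<in>A. \<Sum>b\<in>B. c a b * v a b x) t = (\<Sum>x\<in>J. \<Sum>y\<in>J. \<Sum>a\<in>A. \<Sum>b\<in>B. c a b * (w x * v a b y * Ma x y t))"
    unfolding P_def by (simp add: sum_distrib_left sum_distrib_right mult_ac)
  also have "\<dots> = (\<Sum>a\<in>A. \<Sum>b\<in>B. \<Sum>x\<in>J. \<Sum>y\<in>J. c a b * (w x * v a b y * Ma x y t))"
    by (rule sum_perm_c)
  also have "\<dots> = (\<Sum>a\<in>A. \<Sum>b\<in>B. c a b * P w (v a b) t)"
    unfolding P_def by (simp add: sum_distrib_left)
  finally show ?thesis .
qed

lemma P_unitL: "t \<in> J \<Longrightarrow> P ua w t = w t"
proof -
  assume t: "t \<in> J"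
  have "P ua w t = (\<Sum>y\<in>J. (\<Sum>x\<in>J. ua x * Ma x y t) * w y)"
    unfolding P_def by (subst sum.swap) (simp add: sum_distrib_left sum_distrib_right mult_ac)
  also have "\<dots> = (\<Sum>y\<in>J. if y = t then w y else 0)"
    using t by (intro sum.cong) (auto simp: unitL)
  finally show ?thesis using t finJ by simp
qed

lemma P_unitR: "t \<in> J \<Longrightarrow> P w ua t = w t"
proof -
  assume t: "t \<in> J"
  have "P w ua t = (\<Sum>x\<in>J. (\<Sum>y\<in>J. ua y * Ma x y t) * w x)"
    unfolding P_def by (simp add: sum_distrib_left sum_distrib_right mult_ac)
  also have "\<dots> = (\<Sum>x\<in>J. if x = t then w x else 0)"
    using t by (intro sum.cong) (auto simp: unitR)
  finally show ?thesis using t finJ by simp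
qed


definition bv where "bv a = (\<lambda>y. if y = a then 1 else 0)"

lemma P_bvL: "a \<in> J \<Longrightarrow> P (bv a) w t = (\<Sum>y\<in>J. w y * Ma a y t)"
  unfolding P_def bv_def by (simp add: if_distrib[of "\<lambda>x. x * _"] sum.delta' sum.delta sum_ifP finJ cong: if_cong)
lemma P_bvR: "b \<in> J \<Longrightarrow> P v (bv b) t = (\<Sum>x\<in>J. v x * Ma x b t)"
  unfolding P_def bv_def by (simp add: if_distrib[of "\<lambda>x. _ * x * _"] sum.delta' sum.delta sum_ifP finJ cong: if_cong)
lemma P_bvbv: "a \<in> J \<Longrightarrow> b \<in> J \<Longrightarrow> P (bv a) (bv b) t = Ma a b t"
  by (simp add: P_bvL) (simp add: bv_def if_distrib[of "\<lambda>x. x * _"] sum.delta' sum.delta sum_ifP finJ cong: if_cong)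

lemma P_linL1: "P (\<lambda>x. \<Sum>a\<in>A. c a * v a x) w t = (\<Sum>a\<in>A. c a * P (v a) w t)"
proof -
  have "P (\<lambda>x. \<Sum>a\<in>A. c a * v a x) w t = (\<Sum>x\<in>J. \<Sum>y\<in>J. \<Sum>a\<in>A. c a * (v a x * w y * Ma x y t))"
    unfolding P_def by (simp add: sum_distrib_left sum_distrib_right mult_ac)
  also have "\<dots> = (\<Sum>a\<in>A. \<Sum>x\<in>J. \<Sum>y\<in>J. c a * (v a x * w y * Ma x y t))"
    by (rule sum_perm3)
  also have "\<dots> = (\<Sum>a\<in>A. c a * P (v a) w t)"
    unfolding P_def by (simp add: sum_distrib_left)
  finally show ?thesis .
qed

lemma P_linR1: "P w (\<lambda>x. \<Sum>a\<in>A. c a * v a x) t = (\<Sum>a\<in>A. c a * P w (v a) t)"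
proof -
  have "P w (\<lambda>x. \<Sum>a\<in>A. c a * v a x) t = (\<Sum>x\<in>J. \<Sum>y\<in>J. \<Sum>a\<in>A. c a * (w x * v a y * Ma x y t))"
    unfolding P_def by (simp add: sum_distrib_left sum_distrib_right mult_ac)
  also have "\<dots> = (\<Sum>a\<in>A. \<Sum>x\<in>J. \<Sum>y\<in>J. c a * (w x * v a y * Ma x y t))"
    by (rule sum_perm3)
  also have "\<dots> = (\<Sum>a\<in>A. c a * P w (v a) t)"
    unfolding P_def by (simp add: sum_distrib_left)
  finally show ?thesis .
qed

lemma P_smulL: "P (\<lambda>x. c * v x) w t = c * P v w t"
  unfolding P_def by (simp add: sum_distrib_left mult_ac)
lemma P_smulR: "P v (\<lambda>x. c * w x) t = c * P v w t"
  unfolding P_def by (simp add: sum_distrib_left mult_ac)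
lemma P_cong: "(\<And>x. x \<in> J \<Longrightarrow> v x = v' x) \<Longrightarrow> (\<And>x. x \<in> J \<Longrightarrow> w x = w' x) \<Longrightarrow> P v w t = P v' w' t"
  unfolding P_def by (intro sum.cong) auto
end

locale convol = coalg I Dc ec + alg J Ma ua
  for I :: "'i set" and Dc :: "'i \<Rightarrow> 'i \<Rightarrow> 'i \<Rightarrow> 'k::field" and ec
  and J :: "'j set" and Ma :: "'j \<Rightarrow> 'j \<Rightarrow> 'j \<Rightarrow> 'k" and ua
begin
definition conv where "conv f g l t = (\<Sum>i\<in>I. \<Sum>j\<in>I. Dc l i j * P (f i) (g j) t)"
definition E where "E l t = ec l * ua t"

lemma conv_cong: "(\<And>i x. i \<in> I \<Longrightarrow> x \<in> J \<Longrightarrow> f i x = f' i x) \<Longrightarrow> (\<And>i x. i \<in> I \<Longrightarrow> x \<in> J \<Longrightarrow> g i x = g' i x)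
   \<Longrightarrow> conv f g l t = conv f' g' l t"
  unfolding conv_def by (intro sum.cong refl arg_cong2[where f="(*)"] P_cong) auto

lemma conv_assoc: assumes l: "l \<in> I" and t: "t \<in> J"
  shows "conv (conv f g) h l t = conv f (conv g h) l t"
proof -
  have e1: "conv f g i = (\<lambda>x. \<Sum>a\<in>I. \<Sum>b\<in>I. Dc i a b * P (f a) (g b) x)" for i
    by (rule ext) (simp add: conv_def)
  have e2: "conv g h i = (\<lambda>x. \<Sum>a\<in>I. \<Sum>b\<in>I. Dc i a b * P (g a) (h b) x)" for i
    by (rule ext) (simp add: conv_def)
  have "conv (conv f g) h l t = (\<Sum>i\<in>I. \<Sum>j\<in>I. Dc l i j * (\<Sum>a\<in>I. \<Sum>b\<in>I. Dc i a b * P (P (f a) (g b)) (h j) t))"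
    unfolding conv_def[of "conv f g"] e1 P_linL2 ..
  also have "\<dots> = (\<Sum>a\<in>I. \<Sum>k\<in>I. Dc l a k * (\<Sum>b\<in>I. \<Sum>j\<in>I. Dc k b j * P (P (f a) (g b)) (h j) t))"
    by (rule coass_lift[OF l])
  also have "\<dots> = (\<Sum>a\<in>I. \<Sum>k\<in>I. Dc l a k * (\<Sum>b\<in>I. \<Sum>j\<in>I. Dc k b j * P (f a) (P (g b) (h j)) t))"
    using t by (simp add: P_assoc)
  also have "\<dots> = conv f (conv g h) l t"
    unfolding conv_def[of f] e2 P_linR2 ..
  finally show ?thesis .
qed

lemma conv_E_left: "l \<in> I \<Longrightarrow> t \<in> J \<Longrightarrow> conv E f l t = f l t"
proof -
  assume l: "l \<in> I" and t: "t \<in> J"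
  have "conv E f l t = (\<Sum>i\<in>I. \<Sum>j\<in>I. Dc l i j * (ec i * f j t))"
    unfolding conv_def E_def using t by (simp add: P_smulL P_unitL)
  also have "\<dots> = f l t" by (rule counit_lift[OF l])
  finally show ?thesis .
qed

lemma conv_E_right: "l \<in> I \<Longrightarrow> t \<in> J \<Longrightarrow> conv f E l t = f l t"
proof -
  assume l: "l \<in> I" and t: "t \<in> J"
  have "conv f E l t = (\<Sum>i\<in>I. \<Sum>j\<in>I. Dc l i j * (f i t * ec j))"
    unfolding conv_def E_def using t by (simp add: P_smulR P_unitR mult_ac)
  also have "\<dots> = f l t" by (rule counit_liftR[OF l])
  finally show ?thesis .
qed

lemma inverse_unique:
  assumes gf: "\<And>l t. l \<in> I \<Longrightarrow> t \<in> J \<Longrightarrow> conv g f l t = E l t"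
    and fh: "\<And>l t. l \<in> I \<Longrightarrow> t \<in> J \<Longrightarrow> conv f h l t = E l t"
    and l: "l \<in> I" and t: "t \<in> J"
  shows "g l t = h l t"
proof -
  have "g l t = conv g E l t" using l t by (simp add: conv_E_right)
  also have "\<dots> = conv g (conv f h) l t" by (rule conv_cong) (auto simp: fh)
  also have "\<dots> = conv (conv g f) h l t" using l t by (simp add: conv_assoc)
  also have "\<dots> = conv E h l t" by (rule conv_cong) (auto simp: gf)
  also have "\<dots> = h l t" using l t by (simp add: conv_E_left)
  finally show ?thesis .
qed
end


lemma sum_pair: "(\<Sum>p\<in>A\<times>B. f p) = (\<Sum>a\<in>A. \<Sum>b\<in>B. f (a,b))"
  by (simp add: sum.cartesian_product)

definition tens3 :: "('i \<Rightarrow> 'i \<Rightarrow> 'i \<Rightarrow> 'k::field) \<Rightarrow> 'i\<times>'i \<Rightarrow> 'i\<times>'i \<Rightarrow> 'i\<times>'i \<Rightarrow> 'k" where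
  "tens3 Dc l i j = Dc (fst l) (fst i) (fst j) * Dc (snd l) (snd i) (snd j)"
definition tens1 :: "('i \<Rightarrow> 'k::field) \<Rightarrow> 'i\<times>'i \<Rightarrow> 'k" where
  "tens1 ec i = ec (fst i) * ec (snd i)"

lemma sum_pair_prod: "(\<Sum>p\<in>A\<times>B. f (fst p) * g (snd p) :: 'k::comm_semiring_1) = (\<Sum>a\<in>A. f a) * (\<Sum>b\<in>B. g b)"
  unfolding sum_pair fst_conv snd_conv by (rule sum_product[symmetric])

lemma coalg_tensor:
  assumes "coalg I Dc ec"
  shows "coalg (I \<times> I) (tens3 Dc) (tens1 ec)"
proof -
  interpret coalg I Dc ec by fact
  show ?thesis
  proof
    show "finite (I \<times> I)" using finI by simp
  next
    fix l a b c assume h: "l \<in> I \<times> I" "a \<in> I \<times> I" "b \<in> I \<times> I" "c \<in> I \<times> I"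
    have "(\<Sum>i\<in>I \<times> I. tens3 Dc l i c * tens3 Dc i a b)
      = (\<Sum>i\<in>I \<times> I. (Dc (fst l) (fst i) (fst c) * Dc (fst i) (fst a) (fst b)) * (Dc (snd l) (snd i) (snd c) * Dc (snd i) (snd a) (snd b)))"
      by (simp add: tens3_def mult_ac)
    also have "\<dots> = (\<Sum>i\<in>I. Dc (fst l) i (fst c) * Dc i (fst a) (fst b)) * (\<Sum>i\<in>I. Dc (snd l) i (snd c) * Dc i (snd a) (snd b))"
      by (rule sum_pair_prod)
    also have "\<dots> = (\<Sum>j\<in>I. Dc (fst l) (fst a) j * Dc j (fst b) (fst c)) * (\<Sum>j\<in>I. Dc (snd l) (snd a) j * Dc j (snd b) (snd c))"
      using h by (auto simp: coass mem_Times_iff)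
    also have "\<dots> = (\<Sum>j\<in>I \<times> I. (Dc (fst l) (fst a) (fst j) * Dc (fst j) (fst b) (fst c)) * (Dc (snd l) (snd a) (snd j) * Dc (snd j) (snd b) (snd c)))"
      by (rule sum_pair_prod[symmetric])
    also have "\<dots> = (\<Sum>j\<in>I \<times> I. tens3 Dc l a j * tens3 Dc j b c)"
      by (simp add: tens3_def mult_ac)
    finally show "(\<Sum>i\<in>I \<times> I. tens3 Dc l i c * tens3 Dc i a b) = (\<Sum>j\<in>I \<times> I. tens3 Dc l a j * tens3 Dc j b c)" .
  next
    fix l a assume h: "l \<in> I \<times> I" "a \<in> I \<times> I"
    have "(\<Sum>i\<in>I \<times> I. tens1 ec i * tens3 Dc l i a) = (\<Sum>i\<in>I \<times> I. (ec (fst i) * Dc (fst l) (fst i) (fst a)) * (ec (snd i) * Dc (snd l) (snd i) (snd a)))"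
      by (simp add: tens1_def tens3_def mult_ac)
    also have "\<dots> = (\<Sum>i\<in>I. ec i * Dc (fst l) i (fst a)) * (\<Sum>i\<in>I. ec i * Dc (snd l) i (snd a))"
      by (rule sum_pair_prod)
    also have "\<dots> = (if l = a then 1 else 0)"
      using h by (auto simp: counitL mem_Times_iff prod_eq_iff)
    finally show "(\<Sum>i\<in>I \<times> I. tens1 ec i * tens3 Dc l i a) = (if l = a then 1 else 0)" .
  next
    fix l a assume h: "l \<in> I \<times> I" "a \<in> I \<times> I"
    have "(\<Sum>j\<in>I \<times> I. tens3 Dc l a j * tens1 ec j) = (\<Sum>j\<in>I \<times> I. (Dc (fst l) (fst a) (fst j) * ec (fst j)) * (Dc (snd l) (snd a) (snd j) * ec (snd j)))"
      by (simp add: tens1_def tens3_def mult_ac)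
    also have "\<dots> = (\<Sum>j\<in>I. Dc (fst l) (fst a) j * ec j) * (\<Sum>j\<in>I. Dc (snd l) (snd a) j * ec j)"
      by (rule sum_pair_prod)
    also have "\<dots> = (if l = a then 1 else 0)"
      using h by (auto simp: counitR mem_Times_iff prod_eq_iff)
    finally show "(\<Sum>j\<in>I \<times> I. tens3 Dc l a j * tens1 ec j) = (if l = a then 1 else 0)" .
  qed
qed

lemma alg_tensor:
  assumes "alg J Ma ua"
  shows "alg (J \<times> J) (tens3 Ma) (tens1 ua)"
proof -
  interpret alg J Ma ua by fact
  show ?thesis
  proof
    show "finite (J \<times> J)" using finJ by simp
  next
    fix i j k s assume h: "i \<in> J \<times> J" "j \<in> J \<times> J" "k \<in> J \<times> J" "s \<in> J \<times> J"
    have "(\<Sum>r\<in>J \<times> J. tens3 Ma i j r * tens3 Ma r k s)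
      = (\<Sum>r\<in>J \<times> J. (Ma (fst i) (fst j) (fst r) * Ma (fst r) (fst k) (fst s)) * (Ma (snd i) (snd j) (snd r) * Ma (snd r) (snd k) (snd s)))"
      by (simp add: tens3_def mult_ac)
    also have "\<dots> = (\<Sum>r\<in>J. Ma (fst i) (fst j) r * Ma r (fst k) (fst s)) * (\<Sum>r\<in>J. Ma (snd i) (snd j) r * Ma r (snd k) (snd s))"
      by (rule sum_pair_prod)
    also have "\<dots> = (\<Sum>r\<in>J. Ma (fst j) (fst k) r * Ma (fst i) r (fst s)) * (\<Sum>r\<in>J. Ma (snd j) (snd k) r * Ma (snd i) r (snd s))"
      using h by (auto simp: assoc mem_Times_iff)
    also have "\<dots> = (\<Sum>r\<in>J \<times> J. (Ma (fst j) (fst k) (fst r) * Ma (fst i) (fst r) (fst s)) * (Ma (snd j) (snd k) (snd r) * Ma (snd i) (snd r) (snd s)))"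
      by (rule sum_pair_prod[symmetric])
    also have "\<dots> = (\<Sum>r\<in>J \<times> J. tens3 Ma j k r * tens3 Ma i r s)"
      by (simp add: tens3_def mult_ac)
    finally show "(\<Sum>r\<in>J \<times> J. tens3 Ma i j r * tens3 Ma r k s) = (\<Sum>r\<in>J \<times> J. tens3 Ma j k r * tens3 Ma i r s)" .
  next
    fix j s assume h: "j \<in> J \<times> J" "s \<in> J \<times> J"
    have "(\<Sum>r\<in>J \<times> J. tens1 ua r * tens3 Ma r j s) = (\<Sum>r\<in>J \<times> J. (ua (fst r) * Ma (fst r) (fst j) (fst s)) * (ua (snd r) * Ma (snd r) (snd j) (snd s)))"
      by (simp add: tens1_def tens3_def mult_ac)
    also have "\<dots> = (\<Sum>r\<in>J. ua r * Ma r (fst j) (fst s)) * (\<Sum>r\<in>J. ua r * Ma r (snd j) (snd s))"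
      by (rule sum_pair_prod)
    also have "\<dots> = (if j = s then 1 else 0)"
      using h by (auto simp: unitL mem_Times_iff prod_eq_iff)
    finally show "(\<Sum>r\<in>J \<times> J. tens1 ua r * tens3 Ma r j s) = (if j = s then 1 else 0)" .
  next
    fix j s assume h: "j \<in> J \<times> J" "s \<in> J \<times> J"
    have "(\<Sum>r\<in>J \<times> J. tens1 ua r * tens3 Ma j r s) = (\<Sum>r\<in>J \<times> J. (ua (fst r) * Ma (fst j) (fst r) (fst s)) * (ua (snd r) * Ma (snd j) (snd r) (snd s)))"
      by (simp add: tens1_def tens3_def mult_ac)
    also have "\<dots> = (\<Sum>r\<in>J. ua r * Ma (fst j) r (fst s)) * (\<Sum>r\<in>J. ua r * Ma (snd j) r (snd s))"
      by (rule sum_pair_prod)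
    also have "\<dots> = (if j = s then 1 else 0)"
      using h by (auto simp: unitR mem_Times_iff prod_eq_iff)
    finally show "(\<Sum>r\<in>J \<times> J. tens1 ua r * tens3 Ma j r s) = (if j = s then 1 else 0)" .
  qed
qed


locale hopfc =
  fixes H :: "'k::field hopf"
  assumes hopf: "hopf_algebra H" and cocom: "cocommutative H"
begin
abbreviation "d \<equiv> dim H"
abbreviation "V \<equiv> vecs H"
abbreviation "m \<equiv> mu H"
abbreviation "D \<equiv> delta H"
abbreviation "ep \<equiv> eps H"
abbreviation "s \<equiv> anti H"
abbreviation "u \<equiv> unit H"

lemma bvec_apply: "bvec i j = (if j = i then 1 else 0)" by (simp add: bvec_def)

lemma bvec_V: "i < d \<Longrightarrow> bvec i \<in> V"
  by (simp add: vecs_def bvec_def)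

lemma ifm1: "(if P then (1::'a::semiring_1) else 0) * x = (if P then x else 0)" by simp
lemma ifm2: "x * (if P then (1::'a::semiring_1) else 0) = (if P then x else 0)" by simp
lemma ifm3: "(if P then (y::'a::semiring_1) else 0) * x = (if P then y * x else 0)" by simp
lemma ifm4: "x * (if P then (y::'a::semiring_1) else 0) = (if P then x * y else 0)" by simp
lemma ifm5: "(\<Sum>j\<in>A. if P then f j else (0::'a::comm_monoid_add)) = (if P then (\<Sum>j\<in>A. f j) else 0)" by simp
lemmas ifm = ifm1 ifm2 ifm3 ifm4 ifm5

lemma sum_delta_lt: "i < (n::nat) \<Longrightarrow> (\<Sum>j<n. (if j = i then 1 else 0) * f j) = (f i::'k::field)"
  by (simp add: ifm)

lemma hm_bvR: "k < d \<Longrightarrow> hmult H v (bvec k) t = (if t < d then (\<Sum>a<d. v a * m a k t) else 0)"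
  unfolding hmult_def bvec_def
  by (simp add: ifm)

lemma hm_bvL: "i < d \<Longrightarrow> hmult H (bvec i) w t = (if t < d then (\<Sum>b<d. w b * m i b t) else 0)"
  unfolding hmult_def bvec_def
  by (simp add: ifm)

lemma hm_bvbv: "i < d \<Longrightarrow> j < d \<Longrightarrow> hmult H (bvec i) (bvec j) t = (if t < d then m i j t else 0)"
  by (simp add: hm_bvL) (simp add: bvec_apply ifm)

lemma hc_bv: "l < d \<Longrightarrow> hcomult H (bvec l) (a,b) = (if a < d \<and> b < d then D l a b else 0)"
  unfolding hcomult_def bvec_def by (simp add: ifm)

lemma he_bv: "l < d \<Longrightarrow> hcounit H (bvec l) = ep l"
  unfolding hcounit_def bvec_def by (simp add: ifm)

lemma ha_bv: "l < d \<Longrightarrow> hanti H (bvec l) t = (if t < d then s l t else 0)"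
  unfolding hanti_def bvec_def by (simp add: ifm)

lemma hmult_V: "hmult H v w \<in> V" by (simp add: hmult_def vecs_def)

lemma u_V: "u \<in> V" using hopf by (simp add: hopf_algebra_def)

lemma ax_assoc: "v \<in> V \<Longrightarrow> w \<in> V \<Longrightarrow> x \<in> V \<Longrightarrow> hmult H (hmult H v w) x = hmult H v (hmult H w x)"
  using hopf by (simp add: hopf_algebra_def)
lemma ax_unit: "v \<in> V \<Longrightarrow> hmult H u v = v \<and> hmult H v u = v"
  using hopf by (simp add: hopf_algebra_def)
lemma ax_coass: "v \<in> V \<Longrightarrow> (\<lambda>(a, b, c). \<Sum>i<d. hcomult H v (i, c) * hcomult H (bvec i) (a, b))
      = (\<lambda>(a, b, c). \<Sum>j<d. hcomult H v (a, j) * hcomult H (bvec j) (b, c))"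
  using hopf by (simp add: hopf_algebra_def)
lemma ax_counit: "v \<in> V \<Longrightarrow> (\<lambda>a. \<Sum>i<d. hcounit H (bvec i) * hcomult H v (i, a)) = v
      \<and> (\<lambda>a. \<Sum>j<d. hcomult H v (a, j) * hcounit H (bvec j)) = v"
  using hopf by (simp add: hopf_algebra_def)
lemma ax_dm: "v \<in> V \<Longrightarrow> w \<in> V \<Longrightarrow> hcomult H (hmult H v w) = tmult H (hcomult H v) (hcomult H w)"
  using hopf by (simp add: hopf_algebra_def)
lemma ax_du: "hcomult H u = tens_prod u u"
  using hopf by (simp add: hopf_algebra_def)
lemma ax_em: "v \<in> V \<Longrightarrow> w \<in> V \<Longrightarrow> hcounit H (hmult H v w) = hcounit H v * hcounit H w"
  using hopf by (simp add: hopf_algebra_def)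
lemma ax_eu: "hcounit H u = 1"
  using hopf by (simp add: hopf_algebra_def)
lemma ax_S: "v \<in> V \<Longrightarrow>
        vsum (\<lambda>(i, j). smul (hcomult H v (i, j)) (hmult H (hanti H (bvec i)) (bvec j)))
             ({..<d} \<times> {..<d}) = smul (hcounit H v) u
      \<and> vsum (\<lambda>(i, j). smul (hcomult H v (i, j)) (hmult H (bvec i) (hanti H (bvec j))))
             ({..<d} \<times> {..<d}) = smul (hcounit H v) u"
  using hopf by (simp add: hopf_algebra_def)

lemma u_out: "t \<ge> d \<Longrightarrow> u t = 0" using u_V by (simp add: vecs_def)

lemma i_assoc: "i<d \<Longrightarrow> j<d \<Longrightarrow> k<d \<Longrightarrow> t<d \<Longrightarrow> (\<Sum>r<d. m i j r * m r k t) = (\<Sum>r<d. m j k r * m i r t)"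
proof -
  assume h: "i<d" "j<d" "k<d" "t<d"
  have "hmult H (hmult H (bvec i) (bvec j)) (bvec k) t = hmult H (bvec i) (hmult H (bvec j) (bvec k)) t"
    using h by (simp add: ax_assoc bvec_V hmult_V)
  then show ?thesis using h by (simp add: hm_bvR hm_bvL hm_bvbv bvec_apply ifm cong: if_cong)
qed

lemma i_unitL: "j<d \<Longrightarrow> t<d \<Longrightarrow> (\<Sum>r<d. u r * m r j t) = (if j = t then 1 else 0)"
proof -
  assume h: "j<d" "t<d"
  have "hmult H u (bvec j) t = bvec j t" using ax_unit[OF bvec_V[OF h(1)]] by simp
  then show ?thesis using h by (simp add: hm_bvR bvec_apply eq_commute)
qed

lemma i_unitR: "j<d \<Longrightarrow> t<d \<Longrightarrow> (\<Sum>r<d. u r * m j r t) = (if j = t then 1 else 0)"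
proof -
  assume h: "j<d" "t<d"
  have "hmult H (bvec j) u t = bvec j t" using ax_unit[OF bvec_V[OF h(1)]] by simp
  then show ?thesis using h by (simp add: hm_bvL bvec_apply eq_commute)
qed

lemma i_coass: "l<d \<Longrightarrow> a<d \<Longrightarrow> b<d \<Longrightarrow> c<d \<Longrightarrow> (\<Sum>i<d. D l i c * D i a b) = (\<Sum>j<d. D l a j * D j b c)"
proof -
  assume h: "l<d" "a<d" "b<d" "c<d"
  from fun_cong[OF ax_coass[OF bvec_V[OF h(1)]], of "(a,b,c)"]
  show ?thesis using h by (simp add: hc_bv)
qed

lemma i_counitL: "l<d \<Longrightarrow> a<d \<Longrightarrow> (\<Sum>i<d. ep i * D l i a) = (if l = a then 1 else 0)"
proof -
  assume h: "l<d" "a<d"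
  from fun_cong[OF conjunct1[OF ax_counit[OF bvec_V[OF h(1)]]], of a]
  show ?thesis using h by (simp add: hc_bv he_bv bvec_apply eq_commute)
qed

lemma i_counitR: "l<d \<Longrightarrow> a<d \<Longrightarrow> (\<Sum>j<d. D l a j * ep j) = (if l = a then 1 else 0)"
proof -
  assume h: "l<d" "a<d"
  from fun_cong[OF conjunct2[OF ax_counit[OF bvec_V[OF h(1)]]], of a]
  show ?thesis using h by (simp add: hc_bv he_bv bvec_apply eq_commute)
qed

lemma i_dm: "i<d \<Longrightarrow> j<d \<Longrightarrow> a<d \<Longrightarrow> b<d \<Longrightarrow>
  (\<Sum>r<d. m i j r * D r a b) = (\<Sum>i1<d. \<Sum>j1<d. \<Sum>i2<d. \<Sum>j2<d. D i i1 j1 * D j i2 j2 * m i1 i2 a * m j1 j2 b)"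
proof -
  assume h: "i<d" "j<d" "a<d" "b<d"
  from fun_cong[OF ax_dm[OF bvec_V[OF h(1)] bvec_V[OF h(2)]], of "(a,b)"]
  show ?thesis using h by (simp add: hc_bv hm_bvbv hcomult_def tmult_def bvec_apply ifm)
qed

lemma i_du: "a<d \<Longrightarrow> b<d \<Longrightarrow> (\<Sum>r<d. u r * D r a b) = u a * u b"
proof -
  assume h: "a<d" "b<d"
  from fun_cong[OF ax_du, of "(a,b)"]
  show ?thesis using h by (simp add: hcomult_def tens_prod_def)
qed

lemma i_em: "i<d \<Longrightarrow> j<d \<Longrightarrow> (\<Sum>r<d. m i j r * ep r) = ep i * ep j"
proof -
  assume h: "i<d" "j<d"
  from ax_em[OF bvec_V[OF h(1)] bvec_V[OF h(2)]]
  show ?thesis using h by (simp add: he_bv hm_bvbv hcounit_def bvec_apply ifm)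
qed

lemma i_eu: "(\<Sum>r<d. u r * ep r) = 1"
  using ax_eu by (simp add: hcounit_def)

lemma i_S1: "l<d \<Longrightarrow> t<d \<Longrightarrow> (\<Sum>i<d. \<Sum>j<d. D l i j * (\<Sum>r<d. s i r * m r j t)) = ep l * u t"
proof -
  assume h: "l<d" "t<d"
  from fun_cong[OF conjunct1[OF ax_S[OF bvec_V[OF h(1)]]], of t]
  show ?thesis using h by (simp add: vsum_def smul_def sum_pair hc_bv he_bv hm_bvR ha_bv cong: if_cong)
qed

lemma i_S2: "l<d \<Longrightarrow> t<d \<Longrightarrow> (\<Sum>i<d. \<Sum>j<d. D l i j * (\<Sum>r<d. m i r t * s j r)) = ep l * u t"
proof -
  assume h: "l<d" "t<d"
  from fun_cong[OF conjunct2[OF ax_S[OF bvec_V[OF h(1)]]], of t]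
  show ?thesis using h by (simp add: vsum_def smul_def sum_pair hc_bv he_bv hm_bvL ha_bv mult_ac cong: if_cong)
qed

lemma i_cocom: "l<d \<Longrightarrow> i<d \<Longrightarrow> j<d \<Longrightarrow> D l i j = D l j i"
proof -
  assume h: "l<d" "i<d" "j<d"
  from cocom bvec_V[OF h(1)] have "hcomult H (bvec l) (i,j) = hcomult H (bvec l) (j,i)"
    unfolding cocommutative_def by blast
  then show ?thesis using h by (simp add: hc_bv)
qed

sublocale co: coalg "{..<d}" D ep
  by unfold_locales (auto simp: i_coass i_counitL i_counitR)
sublocale al: alg "{..<d}" m u
  by unfold_locales (auto simp: i_assoc i_unitL i_unitR)

end


lemma sum_perm_42: "(\<Sum>i1\<in>A. \<Sum>j1\<in>B. \<Sum>i2\<in>C. \<Sum>j2\<in>E. \<Sum>a\<in>F. \<Sum>b\<in>G. f i1 j1 i2 j2 a b)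
  = (\<Sum>a\<in>F. \<Sum>b\<in>G. \<Sum>i1\<in>A. \<Sum>j1\<in>B. \<Sum>i2\<in>C. \<Sum>j2\<in>E. f i1 j1 i2 j2 a b)"
proof -
  have "(\<Sum>i1\<in>A. \<Sum>j1\<in>B. \<Sum>i2\<in>C. \<Sum>j2\<in>E. \<Sum>a\<in>F. \<Sum>b\<in>G. f i1 j1 i2 j2 a b)
     = (\<Sum>i1\<in>A. \<Sum>j1\<in>B. \<Sum>a\<in>F. \<Sum>b\<in>G. \<Sum>i2\<in>C. \<Sum>j2\<in>E. f i1 j1 i2 j2 a b)"
    by (intro sum.cong refl sum_perm_c)
  also have "\<dots> = (\<Sum>a\<in>F. \<Sum>b\<in>G. \<Sum>i1\<in>A. \<Sum>j1\<in>B. \<Sum>i2\<in>C. \<Sum>j2\<in>E. f i1 j1 i2 j2 a b)"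
    by (rule sum_perm_c)
  finally show ?thesis .
qed

lemma sum_swap_mid: "(\<Sum>a\<in>A. \<Sum>b\<in>B. \<Sum>c\<in>C. \<Sum>e\<in>E. f a b c e) = (\<Sum>a\<in>A. \<Sum>c\<in>C. \<Sum>b\<in>B. \<Sum>e\<in>E. f a b c e)"
  by (intro sum.cong refl sum.swap)

lemma sum_perm_last4: "(\<Sum>a\<in>A. \<Sum>b\<in>B. \<Sum>c\<in>C. \<Sum>e\<in>E. f a b c e) = (\<Sum>e\<in>E. \<Sum>a\<in>A. \<Sum>b\<in>B. \<Sum>c\<in>C. f a b c e)"
proof -
  have "(\<Sum>a\<in>A. \<Sum>b\<in>B. \<Sum>c\<in>C. \<Sum>e\<in>E. f a b c e) = (\<Sum>a\<in>A. \<Sum>e\<in>E. \<Sum>b\<in>B. \<Sum>c\<in>C. f a b c e)"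
    by (intro sum.cong refl sum_perm3)
  also have "\<dots> = (\<Sum>e\<in>E. \<Sum>a\<in>A. \<Sum>b\<in>B. \<Sum>c\<in>C. f a b c e)"
    by (rule sum.swap)
  finally show ?thesis .
qed

context hopfc
begin

lemma dm_lift: assumes "i<d" "j<d"
  shows "(\<Sum>i1<d. \<Sum>j1<d. \<Sum>i2<d. \<Sum>j2<d. D i i1 j1 * D j i2 j2 * (\<Sum>a<d. \<Sum>b<d. m i1 i2 a * m j1 j2 b * Y a b))
     = (\<Sum>r<d. m i j r * (\<Sum>a<d. \<Sum>b<d. D r a b * Y a b))"
proof -
  have "(\<Sum>i1<d. \<Sum>j1<d. \<Sum>i2<d. \<Sum>j2<d. D i i1 j1 * D j i2 j2 * (\<Sum>a<d. \<Sum>b<d. m i1 i2 a * m j1 j2 b * Y a b))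
     = (\<Sum>i1<d. \<Sum>j1<d. \<Sum>i2<d. \<Sum>j2<d. \<Sum>a<d. \<Sum>b<d. D i i1 j1 * D j i2 j2 * m i1 i2 a * m j1 j2 b * Y a b)"
    by (simp add: sum_distrib_left mult_ac)
  also have "\<dots> = (\<Sum>a<d. \<Sum>b<d. \<Sum>i1<d. \<Sum>j1<d. \<Sum>i2<d. \<Sum>j2<d. D i i1 j1 * D j i2 j2 * m i1 i2 a * m j1 j2 b * Y a b)"
    by (rule sum_perm_42)
  also have "\<dots> = (\<Sum>a<d. \<Sum>b<d. (\<Sum>i1<d. \<Sum>j1<d. \<Sum>i2<d. \<Sum>j2<d. D i i1 j1 * D j i2 j2 * m i1 i2 a * m j1 j2 b) * Y a b)"
    by (simp add: sum_distrib_right)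
  also have "\<dots> = (\<Sum>a<d. \<Sum>b<d. (\<Sum>r<d. m i j r * D r a b) * Y a b)"
    using assms by (simp add: i_dm)
  also have "\<dots> = (\<Sum>a<d. \<Sum>b<d. \<Sum>r<d. m i j r * (D r a b * Y a b))"
    by (simp add: sum_distrib_right mult.assoc)
  also have "\<dots> = (\<Sum>r<d. \<Sum>a<d. \<Sum>b<d. m i j r * (D r a b * Y a b))"
    by (rule sum_perm3)
  also have "\<dots> = (\<Sum>r<d. m i j r * (\<Sum>a<d. \<Sum>b<d. D r a b * Y a b))"
    by (simp add: sum_distrib_left)
  finally show ?thesis .
qed


lemma A1: assumes ij: "i<d" "j<d" and t: "t<d"
  shows "(\<Sum>r<d. m i j r * s r t) = (\<Sum>a<d. \<Sum>b<d. s j a * s i b * m a b t)"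
proof -
  interpret c1: convol "{..<d}\<times>{..<d}" "tens3 D" "tens1 ep" "{..<d}" m u
    by (intro convol.intro coalg_tensor co.coalg_axioms al.alg_axioms)
  define Mm where "Mm = (\<lambda>(p::nat\<times>nat) t. m (fst p) (snd p) t)"
  define F where "F = (\<lambda>(p::nat\<times>nat) t. \<Sum>r<d. m (fst p) (snd p) r * s r t)"
  define G where "G = (\<lambda>(p::nat\<times>nat) t. \<Sum>a<d. \<Sum>b<d. s (snd p) a * s (fst p) b * m a b t)"
  have part1: "c1.conv F Mm l t = c1.E l t" if l: "l \<in> {..<d}\<times>{..<d}" and t: "t \<in> {..<d}" for l t
  proof -
    obtain i j where lij: "l = (i,j)" "i<d" "j<d" using l by auto
    have Pe: "al.P (F (p1,p2)) (Mm (q1,q2)) t = (\<Sum>r<d. \<Sum>y<d. m p1 p2 r * m q1 q2 y * (\<Sum>x<d. s r x * m x y t))"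
      for p1 p2 q1 q2
    proof -
      have "al.P (F (p1,p2)) (Mm (q1,q2)) t = (\<Sum>x<d. \<Sum>y<d. \<Sum>r<d. m p1 p2 r * m q1 q2 y * (s r x * m x y t))"
        unfolding al.P_def F_def Mm_def by (simp add: sum_distrib_left sum_distrib_right mult_ac)
      also have "\<dots> = (\<Sum>r<d. \<Sum>x<d. \<Sum>y<d. m p1 p2 r * m q1 q2 y * (s r x * m x y t))"
        by (rule sum_perm3)
      also have "\<dots> = (\<Sum>r<d. \<Sum>y<d. \<Sum>x<d. m p1 p2 r * m q1 q2 y * (s r x * m x y t))"
        by (intro sum.cong refl sum.swap)
      also have "\<dots> = (\<Sum>r<d. \<Sum>y<d. m p1 p2 r * m q1 q2 y * (\<Sum>x<d. s r x * m x y t))"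
        by (simp add: sum_distrib_left)
      finally show ?thesis .
    qed
    have "c1.conv F Mm l t = (\<Sum>p1<d. \<Sum>p2<d. \<Sum>q1<d. \<Sum>q2<d. D i p1 q1 * D j p2 q2 * al.P (F (p1,p2)) (Mm (q1,q2)) t)"
      unfolding c1.conv_def lij by (simp add: sum_pair tens3_def)
    also have "\<dots> = (\<Sum>p1<d. \<Sum>q1<d. \<Sum>p2<d. \<Sum>q2<d. D i p1 q1 * D j p2 q2 * al.P (F (p1,p2)) (Mm (q1,q2)) t)"
      by (rule sum_swap_mid)
    also have "\<dots> = (\<Sum>p1<d. \<Sum>q1<d. \<Sum>p2<d. \<Sum>q2<d. D i p1 q1 * D j p2 q2 * (\<Sum>r<d. \<Sum>y<d. m p1 p2 r * m q1 q2 y * (\<Sum>x<d. s r x * m x y t)))"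
      by (simp only: Pe)
    also have "\<dots> = (\<Sum>z<d. m i j z * (\<Sum>a<d. \<Sum>b<d. D z a b * (\<Sum>x<d. s a x * m x b t)))"
      by (rule dm_lift[OF lij(2,3)])
    also have "\<dots> = (\<Sum>z<d. m i j z * (ep z * u t))"
      using t by (simp add: i_S1)
    also have "\<dots> = (\<Sum>z<d. m i j z * ep z) * u t"
      by (simp add: sum_distrib_left sum_distrib_right mult_ac)
    also have "\<dots> = c1.E l t"
      using lij by (simp add: i_em c1.E_def tens1_def)
    finally show ?thesis .
  qed
  have part2: "c1.conv Mm G l t = c1.E l t" if l: "l \<in> {..<d}\<times>{..<d}" and t: "t \<in> {..<d}" for l t
  proof -
    obtain i j where lij: "l = (i,j)" "i<d" "j<d" using l by auto
    have Pe: "al.P (Mm (p1,p2)) (G (q1,q2)) t = al.P (al.bv p1) (al.P (al.P (al.bv p2) (s q2)) (s q1)) t"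
      if "p1<d" "p2<d" for p1 p2 q1 q2
    proof -
      have "al.P (Mm (p1,p2)) (G (q1,q2)) t = al.P (al.P (al.bv p1) (al.bv p2)) (al.P (s q2) (s q1)) t"
        apply (rule al.P_cong)
         apply (simp add: Mm_def al.P_bvbv that)
        by (simp add: G_def al.P_def)
      also have "\<dots> = al.P (al.bv p1) (al.P (al.bv p2) (al.P (s q2) (s q1))) t"
        using t by (simp add: al.P_assoc)
      also have "\<dots> = al.P (al.bv p1) (al.P (al.P (al.bv p2) (s q2)) (s q1)) t"
        by (rule al.P_cong) (auto simp: al.P_assoc)
      finally show ?thesis .
    qed
    have inner: "(\<Sum>p2<d. \<Sum>q2<d. D j p2 q2 * al.P (al.bv p1) (al.P (al.P (al.bv p2) (s q2)) (s q1)) t)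
        = ep j * al.P (al.bv p1) (s q1) t" if "p1<d" for p1 q1
    proof -
      have "(\<Sum>p2<d. \<Sum>q2<d. D j p2 q2 * al.P (al.bv p1) (al.P (al.P (al.bv p2) (s q2)) (s q1)) t)
          = al.P (al.bv p1) (\<lambda>x. \<Sum>p2<d. \<Sum>q2<d. D j p2 q2 * al.P (al.P (al.bv p2) (s q2)) (s q1) x) t"
        by (rule al.P_linR2[symmetric])
      also have "\<dots> = al.P (al.bv p1) (\<lambda>x. al.P (\<lambda>y. \<Sum>p2<d. \<Sum>q2<d. D j p2 q2 * al.P (al.bv p2) (s q2) y) (s q1) x) t"
        by (simp only: al.P_linL2)
      also have "\<dots> = al.P (al.bv p1) (\<lambda>x. al.P (\<lambda>y. ep j * u y) (s q1) x) t"
      proof (rule al.P_cong[OF refl], rule al.P_cong[OF _ refl])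
        fix y assume y: "y \<in> {..<d}"
        show "(\<Sum>p2<d. \<Sum>q2<d. D j p2 q2 * al.P (al.bv p2) (s q2) y) = ep j * u y"
        proof -
          have "(\<Sum>p2<d. \<Sum>q2<d. D j p2 q2 * al.P (al.bv p2) (s q2) y) = (\<Sum>p2<d. \<Sum>q2<d. D j p2 q2 * (\<Sum>r<d. m p2 r y * s q2 r))"
            by (simp add: al.P_bvL mult.commute)
          also have "\<dots> = ep j * u y" using y lij by (simp add: i_S2)
          finally show ?thesis .
        qed
      qed
      also have "\<dots> = al.P (al.bv p1) (\<lambda>x. ep j * s q1 x) t"
        by (rule al.P_cong[OF refl]) (simp add: al.P_smulL al.P_unitL)
      also have "\<dots> = ep j * al.P (al.bv p1) (s q1) t"
        by (rule al.P_smulR)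
      finally show ?thesis .
    qed
    have "c1.conv Mm G l t = (\<Sum>p1<d. \<Sum>p2<d. \<Sum>q1<d. \<Sum>q2<d. D i p1 q1 * D j p2 q2 * al.P (Mm (p1,p2)) (G (q1,q2)) t)"
      unfolding c1.conv_def lij by (simp add: sum_pair tens3_def)
    also have "\<dots> = (\<Sum>p1<d. \<Sum>q1<d. \<Sum>p2<d. \<Sum>q2<d. D i p1 q1 * D j p2 q2 * al.P (Mm (p1,p2)) (G (q1,q2)) t)"
      by (rule sum_swap_mid)
    also have "\<dots> = (\<Sum>p1<d. \<Sum>q1<d. D i p1 q1 * (\<Sum>p2<d. \<Sum>q2<d. D j p2 q2 * al.P (al.bv p1) (al.P (al.P (al.bv p2) (s q2)) (s q1)) t))"
      by (simp add: Pe sum_distrib_left mult.assoc)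
    also have "\<dots> = (\<Sum>p1<d. \<Sum>q1<d. D i p1 q1 * (ep j * al.P (al.bv p1) (s q1) t))"
      by (simp add: inner)
    also have "\<dots> = ep j * (\<Sum>p1<d. \<Sum>q1<d. D i p1 q1 * (\<Sum>r<d. m p1 r t * s q1 r))"
      by (simp add: sum_distrib_left al.P_bvL mult_ac)
    also have "\<dots> = c1.E l t"
      using lij t i_S2[of i t] by (simp add: c1.E_def tens1_def mult_ac)
    finally show ?thesis .
  qed
  have "F (i,j) t = G (i,j) t"
    by (rule c1.inverse_unique[of F Mm G]) (use part1 part2 ij t in auto)
  then show ?thesis by (simp add: F_def G_def)
qed

lemma i_S2': "l<d \<Longrightarrow> t<d \<Longrightarrow> (\<Sum>i<d. \<Sum>j<d. D l i j * (\<Sum>r<d. s j r * m i r t)) = ep l * u t"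
  using i_S2[of l t] by (simp add: mult.commute)

lemma A2: assumes l: "l<d" and ab: "a<d" "b<d"
  shows "(\<Sum>r<d. s l r * D r a b) = (\<Sum>p<d. \<Sum>q<d. D l p q * s q a * s p b)"
proof -
  interpret c2: convol "{..<d}" D ep "{..<d}\<times>{..<d}" "tens3 m" "tens1 u"
    by (intro convol.intro co.coalg_axioms alg_tensor al.alg_axioms)
  have P2e: "c2.P v w (x,y) = (\<Sum>p1<d. \<Sum>p2<d. \<Sum>q1<d. \<Sum>q2<d. v (p1,p2) * w (q1,q2) * (m p1 q1 x * m p2 q2 y))" for v w x y
    unfolding c2.P_def by (simp add: sum_pair tens3_def)
  define Dm where "Dm = (\<lambda>l (p::nat\<times>nat). D l (fst p) (snd p))"
  define Phi where "Phi = (\<lambda>l (p::nat\<times>nat). \<Sum>r<d. s l r * Dm r p)"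
  define Psi where "Psi = (\<lambda>l (p::nat\<times>nat). \<Sum>a<d. \<Sum>b<d. D l a b * s b (fst p) * s a (snd p))"
  define R where "R = (\<lambda>p q x. \<Sum>c<d. s q c * m p c x)"
  have part1: "c2.conv Phi Dm l t = c2.E l t" if l: "l < d" and t: "t \<in> {..<d}\<times>{..<d}" for l t
  proof -
    obtain x y where t: "t = (x,y)" "x<d" "y<d" using t by auto
    have e1: "c2.P (Dm r) (Dm j) (x,y) = (\<Sum>z<d. m r j z * D z x y)" if "r<d" "j<d" for r j
      using that t i_dm[of r j x y] by (simp add: P2e Dm_def mult_ac)
    have e2: "c2.P (Phi i) (Dm j) (x,y) = (\<Sum>r<d. s i r * (\<Sum>z<d. m r j z * D z x y))" if "j<d" for i j
    proof -
      have "c2.P (Phi i) (Dm j) (x,y) = (\<Sum>r<d. s i r * c2.P (Dm r) (Dm j) (x,y))"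
        unfolding Phi_def by (rule c2.P_linL1)
      then show ?thesis using that by (simp add: e1)
    qed
    have "c2.conv Phi Dm l t = (\<Sum>i<d. \<Sum>j<d. D l i j * (\<Sum>r<d. s i r * (\<Sum>z<d. m r j z * D z x y)))"
      unfolding c2.conv_def t by (simp add: e2)
    also have "\<dots> = (\<Sum>i<d. \<Sum>j<d. \<Sum>r<d. \<Sum>z<d. D l i j * (s i r * (m r j z * D z x y)))"
      by (simp add: sum_distrib_left)
    also have "\<dots> = (\<Sum>z<d. \<Sum>i<d. \<Sum>j<d. \<Sum>r<d. D l i j * (s i r * (m r j z * D z x y)))"
      by (rule sum_perm_last4)
    also have "\<dots> = (\<Sum>z<d. (\<Sum>i<d. \<Sum>j<d. D l i j * (\<Sum>r<d. s i r * m r j z)) * D z x y)"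
      by (simp add: sum_distrib_left sum_distrib_right mult.assoc)
    also have "\<dots> = (\<Sum>z<d. ep l * u z * D z x y)"
      using l by (simp add: i_S1)
    also have "\<dots> = ep l * (\<Sum>z<d. u z * D z x y)"
      by (simp add: sum_distrib_left mult.assoc)
    also have "\<dots> = c2.E l t"
      using t by (simp add: i_du c2.E_def tens1_def)
    finally show ?thesis .
  qed
  have part2: "c2.conv Dm Psi l t = c2.E l t" if l: "l < d" and t: "t \<in> {..<d}\<times>{..<d}" for l t
  proof -
    obtain x y where t: "t = (x,y)" "x<d" "y<d" using t by auto
    have e1: "c2.P (Dm i) (Psi j) (x,y) = (\<Sum>p1<d. \<Sum>p2<d. D i p1 p2 * (\<Sum>a<d. \<Sum>b<d. D j a b * (R p1 b x * R p2 a y)))" for i j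
    proof -
      have "c2.P (Dm i) (Psi j) (x,y) = (\<Sum>p1<d. \<Sum>p2<d. \<Sum>q1<d. \<Sum>q2<d. \<Sum>a<d. \<Sum>b<d. D i p1 p2 * (D j a b * (s b q1 * m p1 q1 x * (s a q2 * m p2 q2 y))))"
        by (simp add: P2e Dm_def Psi_def sum_distrib_left sum_distrib_right mult_ac)
      also have "\<dots> = (\<Sum>p1<d. \<Sum>p2<d. \<Sum>a<d. \<Sum>b<d. \<Sum>q1<d. \<Sum>q2<d. D i p1 p2 * (D j a b * (s b q1 * m p1 q1 x * (s a q2 * m p2 q2 y))))"
        by (intro sum.cong refl sum_perm_c)
      also have "\<dots> = (\<Sum>p1<d. \<Sum>p2<d. \<Sum>a<d. \<Sum>b<d. \<Sum>q2<d. \<Sum>q1<d. D i p1 p2 * (D j a b * (s b q1 * m p1 q1 x * (s a q2 * m p2 q2 y))))"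
        by (intro sum.cong refl sum.swap)
      also have "\<dots> = (\<Sum>p1<d. \<Sum>p2<d. D i p1 p2 * (\<Sum>a<d. \<Sum>b<d. D j a b * (R p1 b x * R p2 a y)))"
        unfolding R_def by (simp add: sum_distrib_left sum_distrib_right sum_product)
      finally show ?thesis .
    qed
    have inner: "(\<Sum>p2<d. \<Sum>j<d. D k p2 j * (\<Sum>a<d. \<Sum>b<d. D j a b * (R p1 b x * R p2 a y))) = R p1 k x * u y"
      if k: "k<d" for k p1
    proof -
      have "(\<Sum>p2<d. \<Sum>j<d. D k p2 j * (\<Sum>a<d. \<Sum>b<d. D j a b * (R p1 b x * R p2 a y)))
          = (\<Sum>w<d. \<Sum>b<d. D k w b * (\<Sum>p2<d. \<Sum>a<d. D w p2 a * (R p1 b x * R p2 a y)))"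
        by (rule co.coass_lift[symmetric]) (simp add: k)
      also have "\<dots> = (\<Sum>w<d. \<Sum>b<d. D k w b * (R p1 b x * (\<Sum>p2<d. \<Sum>a<d. D w p2 a * (\<Sum>r<d. m p2 r y * s a r))))"
        unfolding R_def by (simp add: sum_distrib_left mult_ac)
      also have "\<dots> = (\<Sum>w<d. \<Sum>b<d. D k w b * (ep w * (R p1 b x * u y)))"
        using t by (intro sum.cong refl) (simp add: i_S2' mult_ac)
      also have "\<dots> = R p1 k x * u y"
        by (rule co.counit_lift) (simp add: k)
      finally show ?thesis .
    qed
    have "c2.conv Dm Psi l t = (\<Sum>i<d. \<Sum>j<d. D l i j * (\<Sum>p1<d. \<Sum>p2<d. D i p1 p2 * (\<Sum>a<d. \<Sum>b<d. D j a b * (R p1 b x * R p2 a y))))"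
      unfolding c2.conv_def t by (simp add: e1)
    also have "\<dots> = (\<Sum>p1<d. \<Sum>k<d. D l p1 k * (\<Sum>p2<d. \<Sum>j<d. D k p2 j * (\<Sum>a<d. \<Sum>b<d. D j a b * (R p1 b x * R p2 a y))))"
      by (rule co.coass_lift) (simp add: l)
    also have "\<dots> = (\<Sum>p1<d. \<Sum>k<d. D l p1 k * (R p1 k x * u y))"
      by (simp add: inner)
    also have "\<dots> = (\<Sum>p1<d. \<Sum>k<d. D l p1 k * (\<Sum>r<d. m p1 r x * s k r)) * u y"
      unfolding R_def by (simp add: sum_distrib_left sum_distrib_right mult_ac)
    also have "\<dots> = c2.E l t"
      using t l by (simp add: i_S2' c2.E_def tens1_def mult_ac)
    finally show ?thesis .
  qed
  have "Phi l (a,b) = Psi l (a,b)"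
    by (rule c2.inverse_unique[of Phi Dm Psi]) (use part1 part2 l ab in auto)
  then show ?thesis by (simp add: Phi_def Psi_def Dm_def mult_ac)
qed

end


definition closedsp :: "('a \<Rightarrow> 'k::field) set \<Rightarrow> bool" where
  "closedsp W \<longleftrightarrow> zv \<in> W \<and> (\<forall>v\<in>W. \<forall>w\<in>W. addv v w \<in> W) \<and> (\<forall>c. \<forall>v\<in>W. smul c v \<in> W)"

lemma closedspI: "zv \<in> W \<Longrightarrow> (\<And>v w. v\<in>W \<Longrightarrow> w\<in>W \<Longrightarrow> addv v w \<in> W) \<Longrightarrow> (\<And>c v. v\<in>W \<Longrightarrow> smul c v \<in> W) \<Longrightarrow> closedsp W"
  by (auto simp: closedsp_def)

lemma closedsp_zv: "closedsp W \<Longrightarrow> zv \<in> W" by (simp add: closedsp_def)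
lemma closedsp_add: "closedsp W \<Longrightarrow> v\<in>W \<Longrightarrow> w\<in>W \<Longrightarrow> addv v w \<in> W" by (simp add: closedsp_def)
lemma closedsp_smul: "closedsp W \<Longrightarrow> v\<in>W \<Longrightarrow> smul c v \<in> W" by (simp add: closedsp_def)

lemma closedsp_kspan: "closedsp (kspan S)"
  by (auto simp: closedsp_def intro: kspan.intros)

lemma kspan_least: "closedsp W \<Longrightarrow> S \<subseteq> W \<Longrightarrow> kspan S \<subseteq> W"
proof
  fix x assume W: "closedsp W" and S: "S \<subseteq> W" and x: "x \<in> kspan S"
  from x show "x \<in> W" using W S
    by (induction rule: kspan.induct) (auto simp: closedsp_def)
qed

lemma kspan_mono: "S \<subseteq> T \<Longrightarrow> kspan S \<subseteq> kspan T"
  by (rule kspan_least[OF closedsp_kspan]) (auto intro: kspan.kspan_base)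

lemma vsum_empty: "vsum f {} = zv" by (simp add: vsum_def zv_def)
lemma vsum_insert: "finite A \<Longrightarrow> i \<notin> A \<Longrightarrow> vsum f (insert i A) = addv (f i) (vsum f A)"
  by (simp add: vsum_def addv_def)

lemma closedsp_vsum: assumes W: "closedsp W" and A: "finite A" shows "(\<And>i. i\<in>A \<Longrightarrow> f i \<in> W) \<Longrightarrow> vsum f A \<in> W"
  using A
proof (induction A rule: finite_induct)
  case empty then show ?case using W by (simp add: vsum_empty closedsp_zv)
next
  case (insert i A) then show ?case using W by (simp add: vsum_insert closedsp_add)
qed

lemma vsum_apply: "vsum f A x = (\<Sum>i\<in>A. f i x)" by (simp add: vsum_def)
lemma smul_apply: "smul c v x = c * v x" by (simp add: smul_def)
lemma addv_apply: "addv v w x = v x + w x" by (simp add: addv_def)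
lemma zv_apply: "zv x = 0" by (simp add: zv_def)

lemma closedsp_sum_sp: "closedsp A \<Longrightarrow> closedsp B \<Longrightarrow> closedsp (sum_sp A B)"
proof (rule closedspI)
  assume A: "closedsp A" and B: "closedsp B"
  have "zv = addv zv zv" by (simp add: zv_def addv_def)
  then show "zv \<in> sum_sp A B" unfolding sum_sp_def using A B closedsp_zv by blast
  fix v w assume "v \<in> sum_sp A B" "w \<in> sum_sp A B"
  then obtain a b a' b' where "v = addv a b" "w = addv a' b'" "a\<in>A" "b\<in>B" "a'\<in>A" "b'\<in>B"
    by (auto simp: sum_sp_def)
  moreover have "addv (addv a b) (addv a' b') = addv (addv a a') (addv b b')"
    by (simp add: addv_def fun_eq_iff algebra_simps)
  ultimately show "addv v w \<in> sum_sp A B" unfolding sum_sp_def using A B closedsp_add by blast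
next
  fix c v assume A: "closedsp A" and B: "closedsp B" and "v \<in> sum_sp A B"
  then obtain a b where "v = addv a b" "a\<in>A" "b\<in>B" by (auto simp: sum_sp_def)
  moreover have "smul c (addv a b) = addv (smul c a) (smul c b)"
    by (simp add: addv_def smul_def fun_eq_iff algebra_simps)
  ultimately show "smul c v \<in> sum_sp A B" unfolding sum_sp_def using A B closedsp_smul by blast
qed

lemma sum_sp_mono: "A \<subseteq> A' \<Longrightarrow> B \<subseteq> B' \<Longrightarrow> sum_sp A B \<subseteq> sum_sp A' B'"
  by (auto simp: sum_sp_def)

lemma tens_sp_mono: "A \<subseteq> A' \<Longrightarrow> B \<subseteq> B' \<Longrightarrow> tens_sp A B \<subseteq> tens_sp A' B'"
  unfolding tens_sp_def by (rule kspan_mono) blast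

lemma closedsp_tens_sp: "closedsp (tens_sp A B)"
  by (simp add: tens_sp_def closedsp_kspan)

lemma tens_sp_base: "a \<in> A \<Longrightarrow> b \<in> B \<Longrightarrow> tens_prod a b \<in> tens_sp A B"
  unfolding tens_sp_def by (rule kspan.kspan_base) blast

lemma tens_sp_rows_cols:
  fixes T :: "nat\<times>nat \<Rightarrow> 'k::field"
  assumes X: "closedsp X" and Y: "closedsp Y"
  shows "(\<forall>i j. T (i,j) \<noteq> 0 \<longrightarrow> i < n \<and> j < n) \<Longrightarrow> (\<forall>i<n. (\<lambda>j. T (i,j)) \<in> Y) \<Longrightarrow> (\<forall>j<n. (\<lambda>i. T (i,j)) \<in> X)
    \<Longrightarrow> T \<in> tens_sp X Y"
proof (induction "card {i. i<n \<and> (\<exists>j. T(i,j) \<noteq> 0)}" arbitrary: T rule: less_induct)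
  case (less T)
  show ?case
  proof (cases "{i. i<n \<and> (\<exists>j. T(i,j) \<noteq> 0)} = {}")
    case True
    have "T = zv"
    proof (rule ext)
      fix p :: "nat \<times> nat"
      obtain i j where p: "p = (i,j)" by (cases p)
      show "T p = zv p"
      proof (rule ccontr)
        assume "T p \<noteq> zv p"
        then have "T (i,j) \<noteq> 0" by (simp add: p zv_def)
        moreover then have "i < n" using less.prems(1) by blast
        ultimately show False using True by blast
      qed
    qed
    then show ?thesis using closedsp_zv[OF closedsp_tens_sp] by simp
  next
    case False
    then obtain i0 j0 where i0: "i0 < n" and k0: "T(i0,j0) \<noteq> 0" by auto
    then have j0: "j0 < n" using less.prems(1) by auto
    define k where "k = T(i0,j0)"
    define c where "c = (\<lambda>i. T(i,j0))"
    define r where "r = (\<lambda>j. T(i0,j))"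
    define T' where "T' = (\<lambda>p. T p - T(fst p, j0) * T(i0, snd p) / k)"
    have k: "k \<noteq> 0" using k0 by (simp add: k_def)
    have Teq: "T = addv T' (smul (1/k) (tens_prod c r))"
    proof (rule ext)
      fix p :: "nat \<times> nat"
      obtain i j where p: "p = (i,j)" by (cases p)
      show "T p = addv T' (smul (1/k) (tens_prod c r)) p"
        unfolding p addv_def smul_def tens_prod_def T'_def c_def r_def using k
        by (simp add: k_def)
    qed
    have cX: "c \<in> X" using less.prems(3) j0 by (simp add: c_def)
    have rY: "r \<in> Y" using less.prems(2) i0 by (simp add: r_def)
    have supp': "\<forall>i j. T' (i,j) \<noteq> 0 \<longrightarrow> i < n \<and> j < n"
    proof (intro allI impI)
      fix i j assume "T' (i,j) \<noteq> 0"
      then have "T(i,j) \<noteq> 0 \<or> (T(i,j0) \<noteq> 0 \<and> T(i0,j) \<noteq> 0)" unfolding T'_def by force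
      then show "i < n \<and> j < n" using less.prems(1) by blast
    qed
    have rows': "\<forall>i<n. (\<lambda>j. T' (i,j)) \<in> Y"
    proof (intro allI impI)
      fix i assume "i < n"
      have "(\<lambda>j. T' (i,j)) = addv (\<lambda>j. T (i,j)) (smul (- T(i,j0) / k) r)"
        by (auto simp: fun_eq_iff addv_def smul_def T'_def r_def)
      then show "(\<lambda>j. T' (i,j)) \<in> Y" using less.prems(2) \<open>i<n\<close> rY Y by (simp add: closedsp_add closedsp_smul)
    qed
    have cols': "\<forall>j<n. (\<lambda>i. T' (i,j)) \<in> X"
    proof (intro allI impI)
      fix j assume "j < n"
      have "(\<lambda>i. T' (i,j)) = addv (\<lambda>i. T (i,j)) (smul (- T(i0,j) / k) c)"
        by (auto simp: fun_eq_iff addv_def smul_def T'_def c_def)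
      then show "(\<lambda>i. T' (i,j)) \<in> X" using less.prems(3) \<open>j<n\<close> cX X by (simp add: closedsp_add closedsp_smul)
    qed
    have sub: "{i. i<n \<and> (\<exists>j. T'(i,j) \<noteq> 0)} \<subseteq> {i. i<n \<and> (\<exists>j. T(i,j) \<noteq> 0)} - {i0}"
    proof
      fix i assume "i \<in> {i. i<n \<and> (\<exists>j. T'(i,j) \<noteq> 0)}"
      then obtain j where ij: "i < n" "T'(i,j) \<noteq> 0" by auto
      have "i \<noteq> i0"
      proof
        assume "i = i0"
        then have "T'(i,j) = 0" using k by (simp add: T'_def k_def)
        then show False using ij by simp
      qed
      moreover have "\<exists>j. T(i,j) \<noteq> 0"
      proof (rule ccontr)
        assume "\<not> (\<exists>j. T(i,j) \<noteq> 0)"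
        then have "T'(i,j) = 0" by (simp add: T'_def)
        then show False using ij by simp
      qed
      ultimately show "i \<in> {i. i<n \<and> (\<exists>j. T(i,j) \<noteq> 0)} - {i0}" using ij by auto
    qed
    have "card {i. i<n \<and> (\<exists>j. T'(i,j) \<noteq> 0)} < card {i. i<n \<and> (\<exists>j. T(i,j) \<noteq> 0)}"
    proof -
      have fin: "finite {i. i<n \<and> (\<exists>j. T(i,j) \<noteq> 0)}" by simp
      have "card {i. i<n \<and> (\<exists>j. T'(i,j) \<noteq> 0)} \<le> card ({i. i<n \<and> (\<exists>j. T(i,j) \<noteq> 0)} - {i0})"
        by (rule card_mono) (use fin sub in auto)
      also have "\<dots> < card {i. i<n \<and> (\<exists>j. T(i,j) \<noteq> 0)}"
        by (rule card_Diff1_less) (use fin i0 k0 in auto)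
      finally show ?thesis .
    qed
    then have "T' \<in> tens_sp X Y" using less.hyps supp' rows' cols' by blast
    moreover have "tens_prod c r \<in> tens_sp X Y" using cX rY by (rule tens_sp_base)
    ultimately show ?thesis unfolding Teq
      by (intro closedsp_add[OF closedsp_tens_sp] closedsp_smul[OF closedsp_tens_sp])
  qed
qed


context hopfc
begin

lemma bv_eq: "al.bv = bvec" by (simp add: al.bv_def bvec_def fun_eq_iff)

lemma V_out: "x \<in> V \<Longrightarrow> t \<ge> d \<Longrightarrow> x t = 0" by (simp add: vecs_def)

lemma hmult_P: "hmult H x y = (\<lambda>t. if t < d then al.P x y t else 0)"
  by (simp add: hmult_def al.P_def fun_eq_iff)

lemma hmult_Pt: "t < d \<Longrightarrow> hmult H x y t = al.P x y t"
  by (simp add: hmult_P)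

lemma hanti_eq: "hanti H x t = (if t < d then (\<Sum>l<d. x l * s l t) else 0)"
  by (simp add: hanti_def)

lemma hcomult_eq: "hcomult H x (a,b) = (if a < d \<and> b < d then (\<Sum>l<d. x l * D l a b) else 0)"
  by (simp add: hcomult_def)

lemma hanti_V: "hanti H x \<in> V" by (simp add: vecs_def hanti_def)

lemma hcomult_supp: "hcomult H x (a,b) \<noteq> 0 \<Longrightarrow> a < d \<and> b < d"
  by (auto simp: hcomult_eq split: if_splits)

lemma hmult_addL: "hmult H (addv x y) z = addv (hmult H x z) (hmult H y z)"
  by (simp add: hmult_def addv_def fun_eq_iff sum.distrib algebra_simps)
lemma hmult_addR: "hmult H z (addv x y) = addv (hmult H z x) (hmult H z y)"
  by (simp add: hmult_def addv_def fun_eq_iff sum.distrib algebra_simps)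
lemma hmult_smulL: "hmult H (smul c x) z = smul c (hmult H x z)"
  by (simp add: hmult_def smul_def fun_eq_iff sum_distrib_left algebra_simps)
lemma hmult_smulR: "hmult H z (smul c x) = smul c (hmult H z x)"
  by (simp add: hmult_def smul_def fun_eq_iff sum_distrib_left algebra_simps)
lemma hmult_zvL: "hmult H zv z = zv" by (simp add: hmult_def zv_def fun_eq_iff)
lemma hmult_zvR: "hmult H z zv = zv" by (simp add: hmult_def zv_def fun_eq_iff)
lemma hanti_add: "hanti H (addv x y) = addv (hanti H x) (hanti H y)"
  by (simp add: hanti_def addv_def fun_eq_iff sum.distrib algebra_simps)
lemma hanti_smul: "hanti H (smul c x) = smul c (hanti H x)"
  by (simp add: hanti_def smul_def fun_eq_iff sum_distrib_left algebra_simps)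
lemma hanti_zv: "hanti H zv = zv" by (simp add: hanti_def zv_def fun_eq_iff)
lemma hcomult_add: "hcomult H (addv x y) = addv (hcomult H x) (hcomult H y)"
  by (simp add: hcomult_def addv_def fun_eq_iff sum.distrib algebra_simps)
lemma hcomult_smul: "hcomult H (smul c x) = smul c (hcomult H x)"
  by (simp add: hcomult_def smul_def fun_eq_iff sum_distrib_left algebra_simps)
lemma hcomult_zv: "hcomult H zv = zv" by (simp add: hcomult_def zv_def fun_eq_iff)

lemma hcomult_vsum: "finite A \<Longrightarrow> hcomult H (vsum f A) = vsum (\<lambda>i. hcomult H (f i)) A"
  by (induction A rule: finite_induct) (simp_all add: vsum_empty vsum_insert hcomult_zv hcomult_add)

lemma smul_u_V: "smul c u \<in> V" using u_V by (simp add: vecs_def smul_def)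
lemma addv_V: "x \<in> V \<Longrightarrow> y \<in> V \<Longrightarrow> addv x y \<in> V" by (simp add: vecs_def addv_def)
lemma smul_V: "x \<in> V \<Longrightarrow> smul c x \<in> V" by (simp add: vecs_def smul_def)
lemma zv_V: "zv \<in> V" by (simp add: vecs_def zv_def)
lemma closedsp_V: "closedsp V" by (auto intro!: closedspI addv_V smul_V zv_V)
lemma vsum_V: "finite A \<Longrightarrow> (\<And>i. i \<in> A \<Longrightarrow> f i \<in> V) \<Longrightarrow> vsum f A \<in> V"
  by (rule closedsp_vsum[OF closedsp_V])

lemma S_mult: assumes x: "x \<in> V" and y: "y \<in> V"
  shows "hanti H (hmult H x y) = hmult H (hanti H y) (hanti H x)"
proof (rule ext)
  fix t show "hanti H (hmult H x y) t = hmult H (hanti H y) (hanti H x) t"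
  proof (cases "t < d")
    case False then show ?thesis by (simp add: hanti_def hmult_def)
  next
    case t: True
    have "hanti H (hmult H x y) t = (\<Sum>l<d. (\<Sum>i<d. \<Sum>j<d. x i * y j * m i j l) * s l t)"
      using t by (simp add: hanti_def hmult_def)
    also have "\<dots> = (\<Sum>l<d. \<Sum>i<d. \<Sum>j<d. x i * y j * (m i j l * s l t))"
      by (simp add: sum_distrib_right mult.assoc)
    also have "\<dots> = (\<Sum>i<d. \<Sum>j<d. \<Sum>l<d. x i * y j * (m i j l * s l t))"
      by (rule sum_perm3[symmetric])
    also have "\<dots> = (\<Sum>i<d. \<Sum>j<d. x i * y j * (\<Sum>l<d. m i j l * s l t))"
      by (simp add: sum_distrib_left)
    also have "\<dots> = (\<Sum>i<d. \<Sum>j<d. x i * y j * (\<Sum>a<d. \<Sum>b<d. s j a * s i b * m a b t))"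
      using t by (simp add: A1)
    also have "\<dots> = (\<Sum>i<d. \<Sum>j<d. \<Sum>a<d. \<Sum>b<d. x i * y j * (s j a * s i b * m a b t))"
      by (simp add: sum_distrib_left)
    also have "\<dots> = (\<Sum>a<d. \<Sum>b<d. \<Sum>j<d. \<Sum>i<d. x i * y j * (s j a * s i b * m a b t))"
      by (rule sum_perm_a)
    also have "\<dots> = hmult H (hanti H y) (hanti H x) t"
      using t by (simp add: hmult_def hanti_def sum_distrib_left sum_distrib_right mult_ac)
    finally show ?thesis .
  qed
qed

end


context hopfc
begin

definition tmap :: "((nat \<Rightarrow> 'k) \<Rightarrow> nat \<Rightarrow> 'k) \<Rightarrow> ((nat \<Rightarrow> 'k) \<Rightarrow> nat \<Rightarrow> 'k) \<Rightarrow> (nat \<times> nat \<Rightarrow> 'k) \<Rightarrow> nat \<times> nat \<Rightarrow> 'k" where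
  "tmap f g T = (\<lambda>(a,b). \<Sum>c<d. \<Sum>e<d. T (c,e) * f (bvec c) a * g (bvec e) b)"

definition bexp :: "((nat \<Rightarrow> 'k) \<Rightarrow> nat \<Rightarrow> 'k) \<Rightarrow> bool" where
  "bexp f \<longleftrightarrow> (\<forall>x\<in>V. f x = (\<lambda>a. \<Sum>c<d. x c * f (bvec c) a))"

lemma tmap_tp: assumes f: "bexp f" and g: "bexp g" and x: "x \<in> V" and y: "y \<in> V"
  shows "tmap f g (tens_prod x y) = tens_prod (f x) (g y)"
proof (rule ext, clarify)
  fix a b
  have "tmap f g (tens_prod x y) (a,b) = (\<Sum>c<d. x c * f (bvec c) a) * (\<Sum>e<d. y e * g (bvec e) b)"
    by (simp add: tmap_def tens_prod_def sum_product mult_ac)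
  also have "\<dots> = f x a * g y b"
    using f g x y unfolding bexp_def by metis
  finally show "tmap f g (tens_prod x y) (a,b) = tens_prod (f x) (g y) (a,b)"
    by (simp add: tens_prod_def)
qed

lemma tmap_add: "tmap f g (addv T T') = addv (tmap f g T) (tmap f g T')"
  by (simp add: tmap_def addv_def fun_eq_iff sum.distrib algebra_simps split: prod.split)
lemma tmap_smul: "tmap f g (smul c T) = smul c (tmap f g T)"
  by (simp add: tmap_def smul_def fun_eq_iff sum_distrib_left algebra_simps split: prod.split)
lemma tmap_zv: "tmap f g zv = zv"
  by (simp add: tmap_def zv_def fun_eq_iff split: prod.split)

lemma tmap_sp:
  assumes A: "A \<subseteq> V" and B: "B \<subseteq> V" and f: "bexp f" and g: "bexp g"
    and fA: "f ` A \<subseteq> A'" and gB: "g ` B \<subseteq> B'" and T: "T \<in> tens_sp A B"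
  shows "tmap f g T \<in> tens_sp A' B'"
proof -
  from T have "T \<in> kspan {tens_prod a b | a b. a \<in> A \<and> b \<in> B}" by (simp add: tens_sp_def)
  then show ?thesis
  proof (induction rule: kspan.induct)
    case kspan_zero then show ?case by (simp add: tmap_zv closedsp_zv[OF closedsp_tens_sp])
  next
    case (kspan_base v)
    then obtain a b where v: "v = tens_prod a b" "a \<in> A" "b \<in> B" by blast
    then have "tmap f g v = tens_prod (f a) (g b)" using A B f g by (auto intro: tmap_tp)
    then show ?case using v fA gB by (auto intro: tens_sp_base)
  next
    case (kspan_add v w) then show ?case by (simp add: tmap_add closedsp_add[OF closedsp_tens_sp])
  next
    case (kspan_smul v c) then show ?case by (simp add: tmap_smul closedsp_smul[OF closedsp_tens_sp])
  qed
qed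

lemma tmap_sum_sp:
  assumes "A \<subseteq> V" "B \<subseteq> V" "C \<subseteq> V" "E \<subseteq> V" "bexp f" "bexp g"
    "f ` A \<subseteq> A'" "g ` B \<subseteq> B'" "f ` C \<subseteq> C'" "g ` E \<subseteq> E'"
    and T: "T \<in> sum_sp (tens_sp A B) (tens_sp C E)"
  shows "tmap f g T \<in> sum_sp (tens_sp A' B') (tens_sp C' E')"
proof -
  obtain T1 T2 where T: "T = addv T1 T2" "T1 \<in> tens_sp A B" "T2 \<in> tens_sp C E"
    using T by (auto simp: sum_sp_def)
  have "tmap f g T1 \<in> tens_sp A' B'" "tmap f g T2 \<in> tens_sp C' E'"
    using assms T by (auto intro: tmap_sp)
  then show ?thesis unfolding T tmap_add sum_sp_def by blast
qed

lemma bexp_hanti: "bexp (hanti H)"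
  unfolding bexp_def by (auto simp: hanti_def fun_eq_iff bvec_apply ifm)

lemma bexp_id: "bexp (\<lambda>x. x)"
  unfolding bexp_def by (auto simp: fun_eq_iff bvec_apply ifm V_out)

lemma S_unit: "hanti H u = u"
proof (rule ext)
  fix t show "hanti H u t = u t"
  proof (cases "t < d")
    case False then show ?thesis by (simp add: hanti_def u_out)
  next
    case t: True
    define Q where "Q = (\<lambda>i j. \<Sum>r<d. s i r * m r j t)"
    have "(\<Sum>l<d. u l * (\<Sum>i<d. \<Sum>j<d. D l i j * Q i j)) = (\<Sum>l<d. u l * (ep l * u t))"
      using t by (simp add: i_S1 Q_def)
    also have "\<dots> = (\<Sum>l<d. u l * ep l) * u t" by (simp add: sum_distrib_left sum_distrib_right mult_ac)
    also have "\<dots> = u t" using i_eu by simp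
    finally have e1: "(\<Sum>l<d. u l * (\<Sum>i<d. \<Sum>j<d. D l i j * Q i j)) = u t" .
    have "(\<Sum>l<d. u l * (\<Sum>i<d. \<Sum>j<d. D l i j * Q i j)) = (\<Sum>l<d. \<Sum>i<d. \<Sum>j<d. u l * D l i j * Q i j)"
      by (simp add: sum_distrib_left mult_ac)
    also have "\<dots> = (\<Sum>i<d. \<Sum>j<d. \<Sum>l<d. u l * D l i j * Q i j)"
      by (rule sum_perm3[symmetric])
    also have "\<dots> = (\<Sum>i<d. \<Sum>j<d. (\<Sum>l<d. u l * D l i j) * Q i j)"
      by (simp add: sum_distrib_right)
    also have "\<dots> = (\<Sum>i<d. \<Sum>j<d. u i * u j * Q i j)"
      by (simp add: i_du)
    also have "\<dots> = (\<Sum>i<d. \<Sum>j<d. \<Sum>r<d. u i * s i r * (u j * m r j t))"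
      by (simp add: Q_def sum_distrib_left mult_ac)
    also have "\<dots> = (\<Sum>i<d. \<Sum>r<d. \<Sum>j<d. u i * s i r * (u j * m r j t))"
      by (intro sum.cong refl sum.swap)
    also have "\<dots> = (\<Sum>i<d. \<Sum>r<d. u i * s i r * (\<Sum>j<d. u j * m r j t))"
      by (simp add: sum_distrib_left)
    also have "\<dots> = (\<Sum>i<d. \<Sum>r<d. u i * s i r * (if r = t then 1 else 0))"
      using t by (simp add: i_unitR)
    also have "\<dots> = (\<Sum>i<d. u i * s i t)"
      using t by (simp add: ifm)
    finally show ?thesis using e1 t by (simp add: hanti_def)
  qed
qed

lemma S_comult: assumes x: "x \<in> V"
  shows "hcomult H (hanti H x) = tmap (hanti H) (hanti H) (hcomult H x)"
proof (rule ext, clarify)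
  fix a b
  show "hcomult H (hanti H x) (a,b) = tmap (hanti H) (hanti H) (hcomult H x) (a,b)"
  proof (cases "a < d \<and> b < d")
    case False then show ?thesis by (auto simp: hcomult_def tmap_def hanti_def)
  next
    case True
    then have a: "a<d" and b: "b<d" by auto
    have "hcomult H (hanti H x) (a,b) = (\<Sum>l<d. (\<Sum>c<d. x c * s c l) * D l a b)"
      using a b by (simp add: hcomult_def hanti_def)
    also have "\<dots> = (\<Sum>c<d. x c * (\<Sum>l<d. s c l * D l a b))"
      by (simp add: sum_distrib_left sum_distrib_right mult_ac) (rule sum.swap)
    also have "\<dots> = (\<Sum>c<d. x c * (\<Sum>p<d. \<Sum>q<d. D c p q * s q a * s p b))"
      using a b by (simp add: A2)
    also have "\<dots> = (\<Sum>c<d. x c * (\<Sum>p<d. \<Sum>q<d. D c p q * s p a * s q b))"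
    proof -
      have inn: "(\<Sum>p<d. \<Sum>q<d. D c p q * s q a * s p b) = (\<Sum>p<d. \<Sum>q<d. D c p q * s p a * s q b)" if c: "c < d" for c
      proof -
      have "(\<Sum>p<d. \<Sum>q<d. D c p q * s q a * s p b) = (\<Sum>q<d. \<Sum>p<d. D c p q * s q a * s p b)"
        by (rule sum.swap)
      also have "\<dots> = (\<Sum>q<d. \<Sum>p<d. D c q p * s q a * s p b)"
        using c by (intro sum.cong refl) (simp add: i_cocom)
      finally show ?thesis .
      qed
      then show ?thesis by simp
    qed
    also have "\<dots> = (\<Sum>c<d. \<Sum>p<d. \<Sum>q<d. x c * (D c p q * s p a * s q b))"
      by (simp add: sum_distrib_left)
    also have "\<dots> = (\<Sum>p<d. \<Sum>q<d. \<Sum>c<d. x c * (D c p q * s p a * s q b))"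
      by (rule sum_perm3[symmetric])
    also have "\<dots> = tmap (hanti H) (hanti H) (hcomult H x) (a,b)"
      using a b by (simp add: tmap_def hcomult_def ha_bv sum_distrib_left sum_distrib_right mult_ac)
    finally show ?thesis .
  qed
qed

end


context hopfc
begin

sublocale al2: alg "{..<d}\<times>{..<d}" "tens3 m" "tens1 u"
  by (rule alg_tensor[OF al.alg_axioms])

definition tp :: "(nat \<Rightarrow> 'k) \<Rightarrow> (nat \<Rightarrow> 'k) \<Rightarrow> nat \<times> nat \<Rightarrow> 'k" where
  "tp f g = (\<lambda>z. f (fst z) * g (snd z))"
definition Dh :: "(nat \<Rightarrow> 'k) \<Rightarrow> nat \<times> nat \<Rightarrow> 'k" where
  "Dh v = (\<lambda>z. \<Sum>r<d. v r * D r (fst z) (snd z))"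

lemma P2e: "al2.P v w (a,b) = (\<Sum>p1<d. \<Sum>p2<d. \<Sum>q1<d. \<Sum>q2<d. v (p1,p2) * w (q1,q2) * (m p1 q1 a * m p2 q2 b))"
  unfolding al2.P_def by (simp add: sum_pair tens3_def)

lemma P2_tp: "al2.P (tp f g) (tp f' g') (a,b) = al.P f f' a * al.P g g' b"
proof -
  have "al2.P (tp f g) (tp f' g') (a,b) = (\<Sum>p1<d. \<Sum>p2<d. \<Sum>q1<d. \<Sum>q2<d. (f p1 * f' q1 * m p1 q1 a) * (g p2 * g' q2 * m p2 q2 b))"
    by (simp add: P2e tp_def mult_ac)
  also have "\<dots> = al.P f f' a * al.P g g' b"
    unfolding al.P_def by (simp add: sum_product)
  finally show ?thesis .
qed

lemma Dh_mult: assumes a: "a<d" and b: "b<d"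
  shows "(\<Sum>t<d. al.P v w t * D t a b) = al2.P (Dh v) (Dh w) (a,b)"
proof -
  have "(\<Sum>t<d. al.P v w t * D t a b) = (\<Sum>t<d. \<Sum>x<d. \<Sum>y<d. v x * w y * (m x y t * D t a b))"
    unfolding al.P_def by (simp add: sum_distrib_left sum_distrib_right mult_ac)
  also have "\<dots> = (\<Sum>x<d. \<Sum>y<d. \<Sum>t<d. v x * w y * (m x y t * D t a b))"
    by (rule sum_perm3[symmetric])
  also have "\<dots> = (\<Sum>x<d. \<Sum>y<d. v x * w y * (\<Sum>t<d. m x y t * D t a b))"
    by (simp add: sum_distrib_left)
  also have "\<dots> = (\<Sum>x<d. \<Sum>y<d. v x * w y * (\<Sum>p1<d. \<Sum>p2<d. \<Sum>q1<d. \<Sum>q2<d. D x p1 p2 * D y q1 q2 * m p1 q1 a * m p2 q2 b))"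
    using a b by (simp add: i_dm)
  also have "\<dots> = (\<Sum>x<d. \<Sum>y<d. \<Sum>p1<d. \<Sum>p2<d. \<Sum>q1<d. \<Sum>q2<d. v x * w y * (D x p1 p2 * D y q1 q2 * m p1 q1 a * m p2 q2 b))"
    by (simp add: sum_distrib_left)
  also have "\<dots> = (\<Sum>p1<d. \<Sum>p2<d. \<Sum>q1<d. \<Sum>q2<d. \<Sum>x<d. \<Sum>y<d. v x * w y * (D x p1 p2 * D y q1 q2 * m p1 q1 a * m p2 q2 b))"
    by (rule sum_perm_42[symmetric])
  also have "\<dots> = (\<Sum>p1<d. \<Sum>p2<d. \<Sum>q1<d. \<Sum>q2<d. \<Sum>y<d. \<Sum>x<d. v x * w y * (D x p1 p2 * D y q1 q2 * m p1 q1 a * m p2 q2 b))"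
    by (intro sum.cong refl sum.swap)
  also have "\<dots> = al2.P (Dh v) (Dh w) (a,b)"
    by (simp add: P2e Dh_def sum_distrib_left sum_distrib_right mult_ac)
  finally show ?thesis .
qed

lemma swap4: assumes l: "l<d"
  shows "(\<Sum>i<d. \<Sum>j<d. D l i j * (\<Sum>p<d. \<Sum>q<d. D i p q * (\<Sum>r<d. \<Sum>w<d. D j r w * Z p q r w)))
       = (\<Sum>i<d. \<Sum>j<d. D l i j * (\<Sum>p<d. \<Sum>q<d. D i p q * (\<Sum>r<d. \<Sum>w<d. D j r w * Z p r q w)))"
proof -
  have key: "(\<Sum>q<d. \<Sum>j<d. D k q j * (\<Sum>r<d. \<Sum>w<d. D j r w * Y q r w))
           = (\<Sum>q<d. \<Sum>j<d. D k q j * (\<Sum>r<d. \<Sum>w<d. D j r w * Y r q w))" if k: "k<d" for k Y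
  proof -
    have g: "(\<Sum>q<d. \<Sum>j<d. D k q j * (\<Sum>r<d. \<Sum>w<d. D j r w * Y q r w))
           = (\<Sum>i<d. \<Sum>w<d. D k i w * (\<Sum>q<d. \<Sum>r<d. D i q r * Y q r w))" for Y
      by (rule co.coass_lift[symmetric]) (simp add: k)
    have c: "(\<Sum>q<d. \<Sum>r<d. D i q r * Y q r w) = (\<Sum>q<d. \<Sum>r<d. D i q r * Y r q w)" if i: "i<d" for i w
    proof -
      have "(\<Sum>q<d. \<Sum>r<d. D i q r * Y r q w) = (\<Sum>r<d. \<Sum>q<d. D i q r * Y r q w)"
        by (rule sum.swap)
      also have "\<dots> = (\<Sum>r<d. \<Sum>q<d. D i r q * Y r q w)"
        using i by (intro sum.cong refl) (simp add: i_cocom)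
      finally show ?thesis by simp
    qed
    show ?thesis unfolding g by (simp add: c)
  qed
  have "(\<Sum>i<d. \<Sum>j<d. D l i j * (\<Sum>p<d. \<Sum>q<d. D i p q * (\<Sum>r<d. \<Sum>w<d. D j r w * Z p q r w)))
      = (\<Sum>p<d. \<Sum>k<d. D l p k * (\<Sum>q<d. \<Sum>j<d. D k q j * (\<Sum>r<d. \<Sum>w<d. D j r w * Z p q r w)))"
    by (rule co.coass_lift) (simp add: l)
  also have "\<dots> = (\<Sum>p<d. \<Sum>k<d. D l p k * (\<Sum>q<d. \<Sum>j<d. D k q j * (\<Sum>r<d. \<Sum>w<d. D j r w * Z p r q w)))"
  proof (rule sum.cong[OF refl], rule sum.cong[OF refl])
    fix p k assume "k \<in> {..<d}"
    then show "D l p k * (\<Sum>q<d. \<Sum>j<d. D k q j * (\<Sum>r<d. \<Sum>w<d. D j r w * Z p q r w))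
       = D l p k * (\<Sum>q<d. \<Sum>j<d. D k q j * (\<Sum>r<d. \<Sum>w<d. D j r w * Z p r q w))"
      using key[of k "\<lambda>q r w. Z p q r w"] by simp
  qed
  also have "\<dots> = (\<Sum>i<d. \<Sum>j<d. D l i j * (\<Sum>p<d. \<Sum>q<d. D i p q * (\<Sum>r<d. \<Sum>w<d. D j r w * Z p r q w)))"
    by (rule co.coass_lift[symmetric]) (simp add: l)
  finally show ?thesis .
qed

end


lemma prod_dsum: "(\<Sum>p\<in>A. \<Sum>q\<in>B. (f p q::'k::comm_ring_1)) * (\<Sum>r\<in>C. \<Sum>w\<in>E. g r w) = (\<Sum>p\<in>A. \<Sum>q\<in>B. \<Sum>r\<in>C. \<Sum>w\<in>E. f p q * g r w)"
  by (simp add: sum_distrib_left sum_distrib_right) (rule sum_perm_c)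

lemma sum_pull2: "(\<Sum>c\<in>A. \<Sum>e\<in>B. (X c e::'k::comm_ring_1) * (\<Sum>r\<in>C. \<Sum>w\<in>E. Y r w * F c e r w))
   = (\<Sum>r\<in>C. \<Sum>w\<in>E. Y r w * (\<Sum>c\<in>A. \<Sum>e\<in>B. X c e * F c e r w))"
proof -
  have "(\<Sum>c\<in>A. \<Sum>e\<in>B. X c e * (\<Sum>r\<in>C. \<Sum>w\<in>E. Y r w * F c e r w))
     = (\<Sum>c\<in>A. \<Sum>e\<in>B. \<Sum>r\<in>C. \<Sum>w\<in>E. Y r w * (X c e * F c e r w))"
    by (simp add: sum_distrib_left mult_ac)
  also have "\<dots> = (\<Sum>r\<in>C. \<Sum>w\<in>E. \<Sum>c\<in>A. \<Sum>e\<in>B. Y r w * (X c e * F c e r w))"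
    by (rule sum_perm_c)
  also have "\<dots> = (\<Sum>r\<in>C. \<Sum>w\<in>E. Y r w * (\<Sum>c\<in>A. \<Sum>e\<in>B. X c e * F c e r w))"
    by (simp add: sum_distrib_left)
  finally show ?thesis .
qed

context hopfc
begin

lemma P_assoc4: assumes t: "t < d"
  shows "al.P (al.P a (al.P x b)) (al.P c (al.P y e)) t = al.P (al.P a x) (al.P (al.P b c) (al.P y e)) t"
proof -
  have "al.P (al.P a (al.P x b)) (al.P c (al.P y e)) t = al.P a (al.P (al.P x b) (al.P c (al.P y e))) t"
    using t by (simp add: al.P_assoc)
  also have "\<dots> = al.P a (al.P x (al.P b (al.P c (al.P y e)))) t"
    by (rule al.P_cong[OF refl]) (simp add: al.P_assoc)
  also have "\<dots> = al.P a (al.P x (al.P (al.P b c) (al.P y e))) t"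
    by (rule al.P_cong[OF refl], rule al.P_cong[OF refl]) (simp add: al.P_assoc)
  also have "\<dots> = al.P (al.P a x) (al.P (al.P b c) (al.P y e)) t"
    using t by (simp add: al.P_assoc)
  finally show ?thesis .
qed

end

locale adpair = hopfc H for H :: "'k::field hopf" +
  fixes L R :: "nat \<Rightarrow> nat \<Rightarrow> 'k"
  assumes c1: "l<d \<Longrightarrow> t<d \<Longrightarrow> (\<Sum>i<d. \<Sum>j<d. D l i j * al.P (L i) (R j) t) = ep l * u t"
  and c2: "l<d \<Longrightarrow> t<d \<Longrightarrow> (\<Sum>i<d. \<Sum>j<d. D l i j * al.P (R i) (L j) t) = ep l * u t"
  and c3: "i<d \<Longrightarrow> p<d \<Longrightarrow> q<d \<Longrightarrow> (\<Sum>r<d. L i r * D r p q) = (\<Sum>a<d. \<Sum>b<d. D i a b * (L a p * L b q))"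
  and c4: "i<d \<Longrightarrow> p<d \<Longrightarrow> q<d \<Longrightarrow> (\<Sum>r<d. R i r * D r p q) = (\<Sum>a<d. \<Sum>b<d. D i a b * (R a p * R b q))"
begin

definition adc where "adc l x t = (\<Sum>i<d. \<Sum>j<d. D l i j * al.P (L i) (al.P x (R j)) t)"

lemma adc_fun: "adc l x = (\<lambda>t. \<Sum>i<d. \<Sum>j<d. D l i j * al.P (L i) (al.P x (R j)) t)"
  by (simp add: adc_def fun_eq_iff)

lemma G0: assumes "l<d" "t<d" shows "adc l u t = ep l * u t"
proof -
  have "adc l u t = (\<Sum>i<d. \<Sum>j<d. D l i j * al.P (L i) (R j) t)"
    unfolding adc_def by (intro sum.cong refl arg_cong2[where f="(*)"] al.P_cong) (auto simp: al.P_unitL)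
  then show ?thesis using assms by (simp add: c1)
qed

lemma G2: assumes l: "l<d" and t: "t<d"
  shows "adc l (al.P x y) t = (\<Sum>i<d. \<Sum>j<d. D l i j * al.P (adc i x) (adc j y) t)"
proof -
  define Z where "Z = (\<lambda>p q r w. al.P (al.P (L p) (al.P x (R q))) (al.P (L r) (al.P y (R w))) t)"
  have Pe: "al.P (adc i x) (adc j y) t = (\<Sum>p<d. \<Sum>q<d. D i p q * (\<Sum>r<d. \<Sum>w<d. D j r w * Z p q r w))" for i j
    unfolding adc_fun al.P_linL2 al.P_linR2 Z_def ..
  have inner: "(\<Sum>q<d. \<Sum>r<d. D v q r * Z p q r w) = ep v * al.P (al.P (L p) x) (al.P y (R w)) t" if v: "v<d" for v p w
  proof -
    have "(\<Sum>q<d. \<Sum>r<d. D v q r * Z p q r w) = (\<Sum>q<d. \<Sum>r<d. D v q r * al.P (al.P (L p) x) (al.P (al.P (R q) (L r)) (al.P y (R w))) t)"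
      unfolding Z_def using t by (simp add: P_assoc4)
    also have "\<dots> = al.P (al.P (L p) x) (\<lambda>z. \<Sum>q<d. \<Sum>r<d. D v q r * al.P (al.P (R q) (L r)) (al.P y (R w)) z) t"
      by (rule al.P_linR2[symmetric])
    also have "\<dots> = al.P (al.P (L p) x) (\<lambda>z. al.P (\<lambda>z'. \<Sum>q<d. \<Sum>r<d. D v q r * al.P (R q) (L r) z') (al.P y (R w)) z) t"
      by (simp only: al.P_linL2)
    also have "\<dots> = al.P (al.P (L p) x) (\<lambda>z. al.P (\<lambda>z'. ep v * u z') (al.P y (R w)) z) t"
      by (rule al.P_cong[OF refl], rule al.P_cong[OF _ refl]) (simp add: c2 v)
    also have "\<dots> = al.P (al.P (L p) x) (\<lambda>z. ep v * al.P y (R w) z) t"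
      by (rule al.P_cong[OF refl]) (simp add: al.P_smulL al.P_unitL)
    also have "\<dots> = ep v * al.P (al.P (L p) x) (al.P y (R w)) t"
      by (rule al.P_smulR)
    finally show ?thesis .
  qed
  have "(\<Sum>i<d. \<Sum>j<d. D l i j * al.P (adc i x) (adc j y) t)
      = (\<Sum>i<d. \<Sum>j<d. D l i j * (\<Sum>p<d. \<Sum>q<d. D i p q * (\<Sum>r<d. \<Sum>w<d. D j r w * Z p q r w)))"
    by (simp add: Pe)
  also have "\<dots> = (\<Sum>p<d. \<Sum>k<d. D l p k * (\<Sum>q<d. \<Sum>j<d. D k q j * (\<Sum>r<d. \<Sum>w<d. D j r w * Z p q r w)))"
    by (rule co.coass_lift) (simp add: l)
  also have "\<dots> = (\<Sum>p<d. \<Sum>k<d. D l p k * (\<Sum>v<d. \<Sum>w<d. D k v w * (\<Sum>q<d. \<Sum>r<d. D v q r * Z p q r w)))"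
  proof (rule sum.cong[OF refl], rule sum.cong[OF refl])
    fix p k assume "k \<in> {..<d}"
    then show "D l p k * (\<Sum>q<d. \<Sum>j<d. D k q j * (\<Sum>r<d. \<Sum>w<d. D j r w * Z p q r w))
      = D l p k * (\<Sum>v<d. \<Sum>w<d. D k v w * (\<Sum>q<d. \<Sum>r<d. D v q r * Z p q r w))"
      using co.coass_lift[of k "\<lambda>q r w. Z p q r w"] by simp
  qed
  also have "\<dots> = (\<Sum>p<d. \<Sum>k<d. D l p k * (\<Sum>v<d. \<Sum>w<d. D k v w * (ep v * al.P (al.P (L p) x) (al.P y (R w)) t)))"
    by (simp add: inner)
  also have "\<dots> = (\<Sum>p<d. \<Sum>k<d. D l p k * al.P (al.P (L p) x) (al.P y (R k)) t)"
    by (intro sum.cong refl arg_cong2[where f="(*)"] co.counit_lift) simp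
  also have "\<dots> = (\<Sum>p<d. \<Sum>k<d. D l p k * al.P (L p) (al.P (al.P x y) (R k)) t)"
  proof -
    have "al.P (al.P (L p) x) (al.P y (R k)) t = al.P (L p) (al.P (al.P x y) (R k)) t" for p k
    proof -
      have "al.P (al.P (L p) x) (al.P y (R k)) t = al.P (L p) (al.P x (al.P y (R k))) t"
        using t by (simp add: al.P_assoc)
      also have "\<dots> = al.P (L p) (al.P (al.P x y) (R k)) t"
        by (rule al.P_cong[OF refl]) (simp add: al.P_assoc)
      finally show ?thesis .
    qed
    then show ?thesis by simp
  qed
  also have "\<dots> = adc l (al.P x y) t" by (simp add: adc_def)
  finally show ?thesis by simp
qed


lemma G5: assumes l: "l<d" and a: "a<d" and b: "b<d"
  shows "(\<Sum>t<d. adc l x t * D t a b)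
    = (\<Sum>i<d. \<Sum>j<d. D l i j * (\<Sum>c<d. \<Sum>e<d. Dh x (c,e) * (adc i (bvec c) a * adc j (bvec e) b)))"
proof -
  define X where "X = (\<lambda>c e. Dh x (c,e))"
  define F where "F = (\<lambda>p q c e r w. al.P (L p) (al.P (bvec c) (R r)) a * al.P (L q) (al.P (bvec e) (R w)) b)"
  define T where "T = (\<lambda>c e r w. tp (al.P (bvec c) (R r)) (al.P (bvec e) (R w)))"
  have DhL: "Dh (L i) z = (\<Sum>p<d. \<Sum>q<d. D i p q * tp (L p) (L q) z)" if "i<d" "z \<in> {..<d}\<times>{..<d}" for i z
    using that c3 by (auto simp: Dh_def tp_def)
  have DhR: "Dh (R j) z = (\<Sum>r<d. \<Sum>w<d. D j r w * tp (R r) (R w) z)" if "j<d" "z \<in> {..<d}\<times>{..<d}" for j z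
    using that c4 by (auto simp: Dh_def tp_def)
  have Dhx: "Dh x z = (\<Sum>c<d. \<Sum>e<d. X c e * tp (bvec c) (bvec e) z)" if "z \<in> {..<d}\<times>{..<d}" for z
    using that by (auto simp: X_def tp_def bvec_apply ifm)
  have step3: "Dh (al.P x (R j)) z = (\<Sum>c<d. \<Sum>e<d. X c e * (\<Sum>r<d. \<Sum>w<d. D j r w * T c e r w z))"
    if j: "j<d" and z: "z \<in> {..<d}\<times>{..<d}" for j z
  proof -
    obtain z1 z2 where zz: "z = (z1,z2)" "z1<d" "z2<d" using z by auto
    have "Dh (al.P x (R j)) z = al2.P (Dh x) (Dh (R j)) z"
      unfolding zz(1) using zz by (simp add: Dh_mult[symmetric]) (simp add: Dh_def)
    also have "\<dots> = al2.P (\<lambda>z. \<Sum>c<d. \<Sum>e<d. X c e * tp (bvec c) (bvec e) z) (\<lambda>z. \<Sum>r<d. \<Sum>w<d. D j r w * tp (R r) (R w) z) z"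
      by (rule al2.P_cong) (auto simp: Dhx DhR j)
    also have "\<dots> = (\<Sum>c<d. \<Sum>e<d. X c e * (\<Sum>r<d. \<Sum>w<d. D j r w * al2.P (tp (bvec c) (bvec e)) (tp (R r) (R w)) z))"
      by (simp only: al2.P_linL2 al2.P_linR2)
    also have "\<dots> = (\<Sum>c<d. \<Sum>e<d. X c e * (\<Sum>r<d. \<Sum>w<d. D j r w * T c e r w z))"
      unfolding zz(1) T_def by (simp only: P2_tp) (simp add: tp_def)
    finally show ?thesis .
  qed
  have step4: "(\<Sum>t<d. al.P (L i) (al.P x (R j)) t * D t a b)
       = (\<Sum>p<d. \<Sum>q<d. D i p q * (\<Sum>c<d. \<Sum>e<d. X c e * (\<Sum>r<d. \<Sum>w<d. D j r w * F p q c e r w)))"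
    if i: "i<d" and j: "j<d" for i j
  proof -
    have "(\<Sum>t<d. al.P (L i) (al.P x (R j)) t * D t a b) = al2.P (Dh (L i)) (Dh (al.P x (R j))) (a,b)"
      using a b by (rule Dh_mult)
    also have "\<dots> = al2.P (\<lambda>z. \<Sum>p<d. \<Sum>q<d. D i p q * tp (L p) (L q) z)
        (\<lambda>z. \<Sum>c<d. \<Sum>e<d. X c e * (\<Sum>r<d. \<Sum>w<d. D j r w * T c e r w z)) (a,b)"
      by (rule al2.P_cong) (auto simp: DhL step3 i j)
    also have "\<dots> = (\<Sum>p<d. \<Sum>q<d. D i p q * (\<Sum>c<d. \<Sum>e<d. X c e * (\<Sum>r<d. \<Sum>w<d. D j r w * al2.P (tp (L p) (L q)) (T c e r w) (a,b))))"
      by (simp only: al2.P_linL2 al2.P_linR2)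
    also have "\<dots> = (\<Sum>p<d. \<Sum>q<d. D i p q * (\<Sum>c<d. \<Sum>e<d. X c e * (\<Sum>r<d. \<Sum>w<d. D j r w * F p q c e r w)))"
      by (simp add: T_def F_def P2_tp)
    finally show ?thesis .
  qed
  have "(\<Sum>t<d. adc l x t * D t a b) = (\<Sum>t<d. \<Sum>i<d. \<Sum>j<d. D l i j * (al.P (L i) (al.P x (R j)) t * D t a b))"
    by (simp add: adc_def sum_distrib_left sum_distrib_right mult_ac)
  also have "\<dots> = (\<Sum>i<d. \<Sum>j<d. \<Sum>t<d. D l i j * (al.P (L i) (al.P x (R j)) t * D t a b))"
    by (rule sum_perm3[symmetric])
  also have "\<dots> = (\<Sum>i<d. \<Sum>j<d. D l i j * (\<Sum>t<d. al.P (L i) (al.P x (R j)) t * D t a b))"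
    by (simp add: sum_distrib_left)
  also have "\<dots> = (\<Sum>i<d. \<Sum>j<d. D l i j * (\<Sum>p<d. \<Sum>q<d. D i p q * (\<Sum>c<d. \<Sum>e<d. X c e * (\<Sum>r<d. \<Sum>w<d. D j r w * F p q c e r w))))"
    by (simp add: step4)
  also have "\<dots> = (\<Sum>i<d. \<Sum>j<d. D l i j * (\<Sum>p<d. \<Sum>q<d. D i p q * (\<Sum>r<d. \<Sum>w<d. D j r w * (\<Sum>c<d. \<Sum>e<d. X c e * F p q c e r w))))"
  proof -
    have "(\<Sum>p<d. \<Sum>q<d. D i p q * (\<Sum>c<d. \<Sum>e<d. X c e * (\<Sum>r<d. \<Sum>w<d. D j r w * F p q c e r w)))
      = (\<Sum>p<d. \<Sum>q<d. D i p q * (\<Sum>r<d. \<Sum>w<d. D j r w * (\<Sum>c<d. \<Sum>e<d. X c e * F p q c e r w)))" for i j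
      by (simp only: sum_pull2[where X=X and Y="D j"])
    then show ?thesis by simp
  qed
  also have "\<dots> = (\<Sum>i<d. \<Sum>j<d. D l i j * (\<Sum>p<d. \<Sum>q<d. D i p q * (\<Sum>r<d. \<Sum>w<d. D j r w * (\<Sum>c<d. \<Sum>e<d. X c e * F p r c e q w))))"
    by (rule swap4[OF l])
  also have "\<dots> = (\<Sum>i<d. \<Sum>j<d. D l i j * (\<Sum>c<d. \<Sum>e<d. X c e * (adc i (bvec c) a * adc j (bvec e) b)))"
  proof -
    have "(\<Sum>p<d. \<Sum>q<d. D i p q * (\<Sum>r<d. \<Sum>w<d. D j r w * (\<Sum>c<d. \<Sum>e<d. X c e * F p r c e q w)))
        = (\<Sum>c<d. \<Sum>e<d. X c e * (adc i (bvec c) a * adc j (bvec e) b))" for i j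
    proof -
      have "(\<Sum>p<d. \<Sum>q<d. D i p q * (\<Sum>r<d. \<Sum>w<d. D j r w * (\<Sum>c<d. \<Sum>e<d. X c e * F p r c e q w)))
          = (\<Sum>p<d. \<Sum>q<d. \<Sum>r<d. \<Sum>w<d. \<Sum>c<d. \<Sum>e<d. X c e * ((D i p q * al.P (L p) (al.P (bvec c) (R q)) a) * (D j r w * al.P (L r) (al.P (bvec e) (R w)) b)))"
        by (simp add: F_def sum_distrib_left mult_ac)
      also have "\<dots> = (\<Sum>c<d. \<Sum>e<d. \<Sum>p<d. \<Sum>q<d. \<Sum>r<d. \<Sum>w<d. X c e * ((D i p q * al.P (L p) (al.P (bvec c) (R q)) a) * (D j r w * al.P (L r) (al.P (bvec e) (R w)) b)))"
        by (rule sum_perm_42)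
      also have "\<dots> = (\<Sum>c<d. \<Sum>e<d. X c e * (adc i (bvec c) a * adc j (bvec e) b))"
        unfolding adc_def prod_dsum by (simp add: sum_distrib_left mult_ac)
      finally show ?thesis .
    qed
    then show ?thesis by simp
  qed
  finally show ?thesis by (simp add: X_def)
qed

end


context adpair
begin

definition Lv where "Lv i = (\<lambda>t. if t < d then L i t else 0)"
definition Rv where "Rv j = (\<lambda>t. if t < d then R j t else 0)"
definition adv where "adv h x = vsum (\<lambda>(i,j). smul (hcomult H h (i,j)) (hmult H (Lv i) (hmult H x (Rv j)))) ({..<d}\<times>{..<d})"

lemma adv_apply: "adv h x t = (\<Sum>i<d. \<Sum>j<d. hcomult H h (i,j) * hmult H (Lv i) (hmult H x (Rv j)) t)"
  by (simp add: adv_def vsum_apply smul_apply sum_pair)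

lemma adv_out: "t \<ge> d \<Longrightarrow> adv h x t = 0"
  by (simp add: adv_apply hmult_def)

lemma adv_V: "adv h x \<in> V" by (simp add: vecs_def adv_out)

lemma adv_pt: assumes l: "l<d" and t: "t<d" shows "adv (bvec l) x t = adc l x t"
proof -
  have "adv (bvec l) x t = (\<Sum>i<d. \<Sum>j<d. D l i j * al.P (Lv i) (hmult H x (Rv j)) t)"
    using l t by (simp add: adv_apply hc_bv hmult_Pt)
  also have "\<dots> = adc l x t"
    unfolding adc_def
    by (intro sum.cong refl arg_cong2[where f="(*)"] al.P_cong) (auto simp: Lv_def hmult_Pt Rv_def intro!: al.P_cong)
  finally show ?thesis .
qed

lemma adv_eq_adc: "l < d \<Longrightarrow> adv (bvec l) x = (\<lambda>t. if t < d then adc l x t else 0)"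
  by (auto simp: fun_eq_iff adv_pt adv_out)

lemma adc_cong: "(\<And>z. z < d \<Longrightarrow> x z = x' z) \<Longrightarrow> adc l x t = adc l x' t"
  unfolding adc_def by (intro sum.cong refl arg_cong2[where f="(*)"] al.P_cong) (auto intro!: al.P_cong)

lemma adv_unit: "l < d \<Longrightarrow> adv (bvec l) u = smul (ep l) u"
  by (auto simp: fun_eq_iff adv_eq_adc G0 smul_def u_out)

lemma adv_mult: assumes l: "l < d"
  shows "adv (bvec l) (hmult H x y) = vsum (\<lambda>(i,j). smul (D l i j) (hmult H (adv (bvec i) x) (adv (bvec j) y))) ({..<d}\<times>{..<d})"
proof (rule ext)
  fix t show "adv (bvec l) (hmult H x y) t = vsum (\<lambda>(i,j). smul (D l i j) (hmult H (adv (bvec i) x) (adv (bvec j) y))) ({..<d}\<times>{..<d}) t"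
  proof (cases "t < d")
    case False then show ?thesis by (simp add: adv_out vsum_apply smul_apply hmult_def split_beta)
  next
    case t: True
    have "adv (bvec l) (hmult H x y) t = adc l (al.P x y) t"
      using l t by (simp add: adv_pt) (rule adc_cong, simp add: hmult_Pt)
    also have "\<dots> = (\<Sum>i<d. \<Sum>j<d. D l i j * al.P (adc i x) (adc j y) t)"
      using l t by (rule G2)
    also have "\<dots> = (\<Sum>i<d. \<Sum>j<d. D l i j * hmult H (adv (bvec i) x) (adv (bvec j) y) t)"
      using t by (intro sum.cong refl arg_cong2[where f="(*)"]) (auto simp: hmult_Pt adv_pt intro!: al.P_cong)
    also have "\<dots> = vsum (\<lambda>(i,j). smul (D l i j) (hmult H (adv (bvec i) x) (adv (bvec j) y))) ({..<d}\<times>{..<d}) t"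
      by (simp add: vsum_apply smul_apply sum_pair)
    finally show ?thesis .
  qed
qed

lemma adv_comult: assumes l: "l < d" and x: "x \<in> V"
  shows "hcomult H (adv (bvec l) x) = vsum (\<lambda>(i,j). smul (D l i j) (tmap (adv (bvec i)) (adv (bvec j)) (hcomult H x))) ({..<d}\<times>{..<d})"
proof (rule ext, clarify)
  fix a b
  show "hcomult H (adv (bvec l) x) (a,b) = vsum (\<lambda>(i,j). smul (D l i j) (tmap (adv (bvec i)) (adv (bvec j)) (hcomult H x))) ({..<d}\<times>{..<d}) (a,b)"
  proof (cases "a < d \<and> b < d")
    case False then show ?thesis
      by (auto simp: hcomult_def vsum_apply smul_apply tmap_def adv_out split_beta)
  next
    case True
    then have a: "a<d" and b: "b<d" by auto
    have "hcomult H (adv (bvec l) x) (a,b) = (\<Sum>t<d. adc l x t * D t a b)"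
      using a b l by (simp add: hcomult_def adv_pt)
    also have "\<dots> = (\<Sum>i<d. \<Sum>j<d. D l i j * (\<Sum>c<d. \<Sum>e<d. Dh x (c,e) * (adc i (bvec c) a * adc j (bvec e) b)))"
      using l a b by (rule G5)
    also have "\<dots> = vsum (\<lambda>(i,j). smul (D l i j) (tmap (adv (bvec i)) (adv (bvec j)) (hcomult H x))) ({..<d}\<times>{..<d}) (a,b)"
      using a b by (simp add: vsum_apply smul_apply sum_pair tmap_def adv_pt hcomult_def Dh_def mult_ac)
    finally show ?thesis .
  qed
qed

lemma adv_lin: assumes x: "x \<in> V" and l: "l < d"
  shows "adc l x t = (\<Sum>c<d. x c * adc l (bvec c) t)"
proof -
  have "adc l x t = adc l (\<lambda>z. \<Sum>c<d. x c * bvec c z) t"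
    by (rule adc_cong) (simp add: bvec_apply ifm)
  also have "\<dots> = (\<Sum>i<d. \<Sum>j<d. D l i j * (\<Sum>c<d. x c * al.P (L i) (al.P (bvec c) (R j)) t))"
    unfolding adc_def al.P_linL1 al.P_linR1 ..
  also have "\<dots> = (\<Sum>i<d. \<Sum>j<d. \<Sum>c<d. x c * (D l i j * al.P (L i) (al.P (bvec c) (R j)) t))"
    by (simp add: sum_distrib_left mult_ac)
  also have "\<dots> = (\<Sum>c<d. \<Sum>i<d. \<Sum>j<d. x c * (D l i j * al.P (L i) (al.P (bvec c) (R j)) t))"
    by (rule sum_perm3)
  also have "\<dots> = (\<Sum>c<d. x c * adc l (bvec c) t)"
    by (simp add: adc_def sum_distrib_left)
  finally show ?thesis .
qed

lemma bexp_adv: "l < d \<Longrightarrow> bexp (adv (bvec l))"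
  unfolding bexp_def by (auto simp: fun_eq_iff adv_eq_adc adv_lin bvec_V)

lemma adv_h: assumes h: "h \<in> V" shows "adv h x = vsum (\<lambda>l. smul (h l) (adv (bvec l) x)) {..<d}"
proof (rule ext)
  fix t
  have "adv h x t = (\<Sum>i<d. \<Sum>j<d. \<Sum>l<d. h l * (D l i j * hmult H (Lv i) (hmult H x (Rv j)) t))"
    by (simp add: adv_apply hcomult_def sum_distrib_left sum_distrib_right mult_ac)
  also have "\<dots> = (\<Sum>l<d. \<Sum>i<d. \<Sum>j<d. h l * (D l i j * hmult H (Lv i) (hmult H x (Rv j)) t))"
    by (rule sum_perm3)
  also have "\<dots> = vsum (\<lambda>l. smul (h l) (adv (bvec l) x)) {..<d} t"
    by (simp add: vsum_apply smul_apply adv_apply hc_bv sum_distrib_left)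
  finally show "adv h x t = vsum (\<lambda>l. smul (h l) (adv (bvec l) x)) {..<d} t" .
qed

lemma adv_add: "adv h (addv x y) = addv (adv h x) (adv h y)"
  by (simp add: fun_eq_iff adv_apply hmult_addL hmult_addR addv_apply sum.distrib algebra_simps)
lemma adv_smul: "adv h (smul c x) = smul c (adv h x)"
  by (simp add: fun_eq_iff adv_apply hmult_smulL hmult_smulR smul_apply sum_distrib_left algebra_simps)
lemma adv_zv: "adv h zv = zv"
  by (simp add: fun_eq_iff adv_apply hmult_zvL hmult_zvR zv_apply)

end


context hopfc
begin

lemma A2c: assumes "i<d" "p<d" "q<d"
  shows "(\<Sum>r<d. s i r * D r p q) = (\<Sum>a<d. \<Sum>b<d. D i a b * (s a p * s b q))"
proof -
  have "(\<Sum>r<d. s i r * D r p q) = (\<Sum>a<d. \<Sum>b<d. D i a b * s b p * s a q)"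
    using assms by (simp add: A2)
  also have "\<dots> = (\<Sum>b<d. \<Sum>a<d. D i a b * s b p * s a q)" by (rule sum.swap)
  also have "\<dots> = (\<Sum>b<d. \<Sum>a<d. D i b a * s b p * s a q)"
    using assms by (intro sum.cong refl) (simp add: i_cocom)
  finally show ?thesis by (simp add: mult_ac)
qed

lemma cS1: "l<d \<Longrightarrow> t<d \<Longrightarrow> (\<Sum>i<d. \<Sum>j<d. D l i j * al.P (s i) (bvec j) t) = ep l * u t"
  unfolding bv_eq[symmetric] by (simp add: al.P_bvR i_S1)
lemma cS2: "l<d \<Longrightarrow> t<d \<Longrightarrow> (\<Sum>i<d. \<Sum>j<d. D l i j * al.P (bvec i) (s j) t) = ep l * u t"
  unfolding bv_eq[symmetric] by (simp add: al.P_bvL i_S2')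
lemma cB: "i<d \<Longrightarrow> p<d \<Longrightarrow> q<d \<Longrightarrow> (\<Sum>r<d. bvec i r * D r p q) = (\<Sum>a<d. \<Sum>b<d. D i a b * (bvec a p * bvec b q))"
  by (simp add: bvec_apply ifm)

end

sublocale hopfc \<subseteq> adL: adpair H s bvec
  by unfold_locales (auto simp: cS1 cS2 A2c cB)
sublocale hopfc \<subseteq> adR: adpair H bvec s
  by unfold_locales (auto simp: cS1 cS2 A2c cB)

lemma vsum_cong: "(\<And>p. p \<in> A \<Longrightarrow> f p = g p) \<Longrightarrow> vsum f A = vsum g A"
  by (simp add: vsum_def fun_eq_iff)

context hopfc
begin

lemma trunc_s: "i < d \<Longrightarrow> (\<lambda>t. if t < d then s i t else 0) = hanti H (bvec i)"
  by (simp add: fun_eq_iff ha_bv)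
lemma trunc_b: "j < d \<Longrightarrow> (\<lambda>t. if t < d then bvec j t else 0) = bvec j"
  by (auto simp: fun_eq_iff bvec_apply)

lemma adL_eq: "adL.adv h x = vsum (\<lambda>(i, j). smul (hcomult H h (i, j)) (hmult H (hanti H (bvec i)) (hmult H x (bvec j)))) ({..<d} \<times> {..<d})"
  unfolding adL.adv_def
  by (rule vsum_cong) (auto simp: adL.Lv_def adL.Rv_def trunc_s trunc_b)

lemma adR_eq: "adR.adv h x = vsum (\<lambda>(i, j). smul (hcomult H h (i, j)) (hmult H (bvec i) (hmult H x (hanti H (bvec j))))) ({..<d} \<times> {..<d})"
  unfolding adR.adv_def
  by (rule vsum_cong) (auto simp: adR.Lv_def adR.Rv_def trunc_s trunc_b)

lemma tmult_addL: "tmult H (addv T1 T2) T = addv (tmult H T1 T) (tmult H T2 T)"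
  by (simp add: tmult_def addv_def fun_eq_iff sum.distrib algebra_simps split: prod.split)
lemma tmult_addR: "tmult H T (addv T1 T2) = addv (tmult H T T1) (tmult H T T2)"
  by (simp add: tmult_def addv_def fun_eq_iff sum.distrib algebra_simps split: prod.split)
lemma tmult_smulL: "tmult H (smul c T1) T = smul c (tmult H T1 T)"
  by (simp add: tmult_def smul_def fun_eq_iff sum_distrib_left algebra_simps split: prod.split)
lemma tmult_smulR: "tmult H T (smul c T1) = smul c (tmult H T T1)"
  by (simp add: tmult_def smul_def fun_eq_iff sum_distrib_left algebra_simps split: prod.split)
lemma tmult_zvL: "tmult H zv T = zv" by (simp add: tmult_def zv_def fun_eq_iff split: prod.split)
lemma tmult_zvR: "tmult H T zv = zv" by (simp add: tmult_def zv_def fun_eq_iff split: prod.split)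

lemma hmult_bexpL: "x \<in> V \<Longrightarrow> hmult H x y a = (\<Sum>c<d. x c * hmult H (bvec c) y a)"
  by (simp add: hmult_def bvec_apply ifm sum_distrib_left mult_ac)
lemma hmult_bexpR: "y \<in> V \<Longrightarrow> hmult H x y a = (\<Sum>c<d. y c * hmult H x (bvec c) a)"
  by (simp add: hmult_def bvec_apply ifm sum_distrib_left mult_ac) (rule impI, rule sum.swap)
lemma hmult_bexp2: "hmult H x y a = (\<Sum>i<d. \<Sum>j<d. x i * y j * hmult H (bvec i) (bvec j) a)"
proof (cases "a < d")
  case True then show ?thesis by (simp add: hm_bvbv) (simp add: hmult_def)
next
  case False then show ?thesis by (simp add: hmult_def)
qed

lemma tmult_tp: assumes "a \<in> V" "b \<in> V" "c \<in> V" "e \<in> V"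
  shows "tmult H (tens_prod a b) (tens_prod c e) = tens_prod (hmult H a c) (hmult H b e)"
proof (rule ext, clarify)
  fix x y
  have "tmult H (tens_prod a b) (tens_prod c e) (x,y)
     = (\<Sum>i1<d. \<Sum>j1<d. \<Sum>i2<d. \<Sum>j2<d. (a i1 * c i2 * hmult H (bvec i1) (bvec i2) x) * (b j1 * e j2 * hmult H (bvec j1) (bvec j2) y))"
    by (simp add: tmult_def tens_prod_def mult_ac)
  also have "\<dots> = (\<Sum>i1<d. \<Sum>i2<d. \<Sum>j1<d. \<Sum>j2<d. (a i1 * c i2 * hmult H (bvec i1) (bvec i2) x) * (b j1 * e j2 * hmult H (bvec j1) (bvec j2) y))"
    by (rule sum_swap_mid)
  also have "\<dots> = (\<Sum>i1<d. \<Sum>i2<d. a i1 * c i2 * hmult H (bvec i1) (bvec i2) x) * (\<Sum>j1<d. \<Sum>j2<d. b j1 * e j2 * hmult H (bvec j1) (bvec j2) y)"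
    by (rule prod_dsum[symmetric])
  also have "\<dots> = hmult H a c x * hmult H b e y"
    by (simp only: hmult_bexp2[of a c x] hmult_bexp2[of b e y])
  finally show "tmult H (tens_prod a b) (tens_prod c e) (x,y) = tens_prod (hmult H a c) (hmult H b e) (x,y)"
    by (simp add: tens_prod_def)
qed

end


context hopfc
begin

definition C0 where "C0 = {smul c u | c. True}"

lemma subspace_iff: "subspace_of H W \<longleftrightarrow> W \<subseteq> V \<and> closedsp W"
  by (auto simp: subspace_of_def closedsp_def)

lemma u_nz: "u \<noteq> zv"
proof
  assume "u = zv"
  then have "hcounit H u = 0" by (simp add: hcounit_def zv_def)
  then show False using ax_eu by simp
qed

lemma C0_V: "C0 \<subseteq> V" by (auto simp: C0_def smul_u_V)

lemma closedsp_C0: "closedsp C0"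
proof (rule closedspI)
  have "zv = smul 0 u" by (simp add: zv_def smul_def fun_eq_iff)
  then show "zv \<in> C0" by (auto simp: C0_def)
next
  fix v w assume "v \<in> C0" "w \<in> C0"
  then obtain a b where "v = smul a u" "w = smul b u" by (auto simp: C0_def)
  then have "addv v w = smul (a+b) u" by (simp add: addv_def smul_def fun_eq_iff algebra_simps)
  then show "addv v w \<in> C0" by (auto simp: C0_def)
next
  fix c v assume "v \<in> C0"
  then obtain a where "v = smul a u" by (auto simp: C0_def)
  then have "smul c v = smul (c*a) u" by (simp add: smul_def fun_eq_iff)
  then show "smul c v \<in> C0" by (auto simp: C0_def)
qed

lemma u_C0: "u \<in> C0"
proof -
  have "u = smul 1 u" by (simp add: smul_def)
  then show ?thesis by (auto simp: C0_def)
qed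

lemma comult_C0: "hcomult H (smul c u) = smul c (tens_prod u u)"
  by (simp add: hcomult_smul ax_du)

lemma C0_simple: "simple_subcoalgebra H C0"
proof -
  have sub: "subcoalgebra H C0"
  proof -
    have "hcomult H ` C0 \<subseteq> tens_sp C0 C0"
    proof
      fix t assume "t \<in> hcomult H ` C0"
      then obtain c where "t = hcomult H (smul c u)" by (auto simp: C0_def)
      then have "t = smul c (tens_prod u u)" by (simp add: comult_C0)
      then show "t \<in> tens_sp C0 C0"
        using closedsp_smul[OF closedsp_tens_sp tens_sp_base[OF u_C0 u_C0]] by simp
    qed
    then show ?thesis unfolding subcoalgebra_def subspace_iff using C0_V closedsp_C0 by simp
  qed
  have ne: "C0 \<noteq> {zv}" using u_C0 u_nz by auto
  have minim: "W' = {zv} \<or> W' = C0" if W': "subcoalgebra H W'" "W' \<subseteq> C0" for W'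
  proof (rule disjCI)
    assume "W' \<noteq> C0"
    have cl: "closedsp W'" using W' by (simp add: subcoalgebra_def subspace_iff)
    show "W' = {zv}"
    proof (rule ccontr)
      assume "W' \<noteq> {zv}"
      then obtain w where w: "w \<in> W'" "w \<noteq> zv" using closedsp_zv[OF cl] by auto
      then obtain c where c: "w = smul c u" using W' by (auto simp: C0_def)
      have "c \<noteq> 0" using w c by (auto simp: smul_def zv_def fun_eq_iff)
      have "C0 \<subseteq> W'"
      proof
        fix v assume "v \<in> C0"
        then obtain a where "v = smul a u" by (auto simp: C0_def)
        then have "v = smul (a / c) w" using \<open>c \<noteq> 0\<close> c by (simp add: smul_def fun_eq_iff)
        then show "v \<in> W'" using closedsp_smul[OF cl w(1)] by simp
      qed
      then show False using W' \<open>W' \<noteq> C0\<close> by auto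
    qed
  qed
  show ?thesis unfolding simple_subcoalgebra_def using sub ne minim by blast
qed

lemma coradical_eq: assumes conn: "connected_hopf H" shows "coradical H = C0"
proof -
  obtain v where v: "v \<noteq> zv" "coradical H = {smul c v | c. True}"
    using conn by (auto simp: connected_hopf_def)
  have C0c: "C0 \<subseteq> coradical H"
  proof -
    have "C0 \<subseteq> \<Union>{W. simple_subcoalgebra H W}" using C0_simple by auto
    also have "\<dots> \<subseteq> coradical H" unfolding coradical_def by (auto intro: kspan.kspan_base)
    finally show ?thesis .
  qed
  then have "u \<in> coradical H" using u_C0 by auto
  then obtain c where c: "u = smul c v" using v by auto
  have "c \<noteq> 0" using c u_nz by (auto simp: smul_def zv_def fun_eq_iff)
  have "coradical H \<subseteq> C0"
  proof
    fix w assume "w \<in> coradical H"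
    then obtain a where "w = smul a v" using v by auto
    then have "w = smul (a / c) u" using c \<open>c \<noteq> 0\<close> by (simp add: smul_def fun_eq_iff)
    then show "w \<in> C0" by (auto simp: C0_def)
  qed
  then show ?thesis using C0c by blast
qed

end


context hopfc
begin

abbreviation "Hf n \<equiv> corad_filt H n"
definition Wn where "Wn k = sum_sp (tens_sp V (Hf k)) (tens_sp C0 V)"
definition rowf where "rowf i p = (\<lambda>b. hcomult H p (i,b))"

lemma closedsp_Wn: "closedsp (Wn k)"
  unfolding Wn_def by (intro closedsp_sum_sp closedsp_tens_sp)

lemma corad_0: "connected_hopf H \<Longrightarrow> Hf 0 = C0" by (simp add: coradical_eq)
lemma corad_Suc: "connected_hopf H \<Longrightarrow> Hf (Suc k) = {v\<in>V. hcomult H v \<in> Wn k}"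
  by (simp add: coradical_eq Wn_def)

lemma S_C0: "hanti H ` C0 \<subseteq> C0"
  by (auto simp: C0_def hanti_smul S_unit)

lemma smul_smul: "smul a (smul b v) = smul (a*b) v" by (simp add: smul_def fun_eq_iff)
lemma adL_C0: "l < d \<Longrightarrow> adL.adv (bvec l) ` C0 \<subseteq> C0"
  unfolding C0_def by (auto simp: adL.adv_smul adL.adv_unit smul_smul)
lemma adR_C0: "l < d \<Longrightarrow> adR.adv (bvec l) ` C0 \<subseteq> C0"
  unfolding C0_def by (auto simp: adR.adv_smul adR.adv_unit smul_smul)

lemma rowf_C0: "rowf i ` C0 \<subseteq> C0"
proof
  fix y assume "y \<in> rowf i ` C0"
  then obtain c where y: "y = rowf i (smul c u)" by (auto simp: C0_def)
  have "y = smul (c * u i) u"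
    by (simp add: y rowf_def comult_C0) (simp add: smul_def tens_prod_def fun_eq_iff mult_ac)
  then show "y \<in> C0" by (auto simp: C0_def)
qed

lemma rowf_V: "rowf i x \<in> V" by (simp add: vecs_def rowf_def hcomult_def)

lemma bexp_rowf: "i < d \<Longrightarrow> bexp (rowf i)"
  unfolding bexp_def rowf_def
proof (intro ballI ext)
  fix x a assume "i < d" "x \<in> V"
  then show "hcomult H x (i, a) = (\<Sum>c<d. x c * hcomult H (bvec c) (i, a))"
    by (cases "a < d") (simp_all add: hcomult_eq bvec_apply ifm)
qed

lemma comult_rowf: assumes x: "x \<in> V" and i: "i < d"
  shows "hcomult H (rowf i x) = tmap (rowf i) (\<lambda>p. p) (hcomult H x)"
proof (rule ext, clarify)
  fix a b
  show "hcomult H (rowf i x) (a,b) = tmap (rowf i) (\<lambda>p. p) (hcomult H x) (a,b)"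
  proof (cases "a < d \<and> b < d")
    case False then show ?thesis
      by (auto simp: hcomult_def tmap_def rowf_def bvec_apply)
  next
    case True
    then have a: "a<d" and b: "b<d" by auto
    have "hcomult H (rowf i x) (a,b) = (\<Sum>c<d. (\<Sum>l<d. x l * D l i c) * D c a b)"
      using a b i by (simp add: hcomult_def rowf_def)
    also have "\<dots> = (\<Sum>l<d. x l * (\<Sum>c<d. D l i c * D c a b))"
      by (simp add: sum_distrib_left sum_distrib_right) (rule trans[OF sum.swap], simp add: mult_ac)
    also have "\<dots> = (\<Sum>l<d. x l * (\<Sum>j<d. D l j b * D j i a))"
      using a b i by (intro sum.cong refl) (simp add: i_coass)
    also have "\<dots> = (\<Sum>j<d. (\<Sum>l<d. x l * D l j b) * D j i a)"
      by (simp add: sum_distrib_left sum_distrib_right) (rule trans[OF sum.swap], simp add: mult_ac)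
    also have "\<dots> = tmap (rowf i) (\<lambda>p. p) (hcomult H x) (a,b)"
      using a b i by (simp add: tmap_def rowf_def hcomult_def bvec_apply ifm hc_bv)
    finally show ?thesis .
  qed
qed

definition FP where "FP n \<longleftrightarrow> Hf n \<subseteq> V \<and> closedsp (Hf n) \<and> hanti H ` Hf n \<subseteq> Hf n
   \<and> (\<forall>l<d. adL.adv (bvec l) ` Hf n \<subseteq> Hf n \<and> adR.adv (bvec l) ` Hf n \<subseteq> Hf n)
   \<and> (\<forall>x\<in>Hf n. \<forall>i<d. rowf i x \<in> Hf n)"

lemma FP_0: "connected_hopf H \<Longrightarrow> FP 0"
proof -
  assume conn: "connected_hopf H"
  have rows: "rowf i x \<in> C0" if "x \<in> C0" for x i using rowf_C0 that by auto
  show ?thesis unfolding FP_def corad_0[OF conn]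
    by (simp add: C0_V closedsp_C0 S_C0 adL_C0 adR_C0 rows)
qed

lemma FP_Suc: assumes conn: "connected_hopf H" and IH: "FP k" shows "FP (Suc k)"
proof -
  have HV: "Hf k \<subseteq> V" and Hcl: "closedsp (Hf k)" and HS: "hanti H ` Hf k \<subseteq> Hf k"
    and HL: "\<And>l. l<d \<Longrightarrow> adL.adv (bvec l) ` Hf k \<subseteq> Hf k"
    and HR: "\<And>l. l<d \<Longrightarrow> adR.adv (bvec l) ` Hf k \<subseteq> Hf k"
    using IH unfolding FP_def by auto
  have eq: "Hf (Suc k) = {v\<in>V. hcomult H v \<in> Wn k}" by (rule corad_Suc[OF conn])
  have VV: "V \<subseteq> V" by simp
  have idV: "(\<lambda>p. p) ` V \<subseteq> V" and idH: "(\<lambda>p. p) ` Hf k \<subseteq> Hf k" by auto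
  have hantiV: "hanti H ` V \<subseteq> V" using hanti_V by auto
  have tm: "tmap f g T \<in> Wn k" if "bexp f" "bexp g" "f ` V \<subseteq> V" "g ` Hf k \<subseteq> Hf k" "f ` C0 \<subseteq> C0" "g ` V \<subseteq> V"
    "T \<in> Wn k" for f g T
    unfolding Wn_def by (rule tmap_sum_sp[OF VV HV C0_V VV that(1,2,3,4,5,6)]) (use that(7) in \<open>simp add: Wn_def\<close>)
  have sub: "Hf (Suc k) \<subseteq> V" using eq by auto
  have cl: "closedsp (Hf (Suc k))"
    unfolding eq
  proof (rule closedspI)
    show "zv \<in> {v \<in> V. hcomult H v \<in> Wn k}" by (simp add: zv_V hcomult_zv closedsp_zv[OF closedsp_Wn])
  next
    fix v w assume "v \<in> {v \<in> V. hcomult H v \<in> Wn k}" "w \<in> {v \<in> V. hcomult H v \<in> Wn k}"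
    then show "addv v w \<in> {v \<in> V. hcomult H v \<in> Wn k}" by (simp add: addv_V hcomult_add closedsp_add[OF closedsp_Wn])
  next
    fix c v assume "v \<in> {v \<in> V. hcomult H v \<in> Wn k}"
    then show "smul c v \<in> {v \<in> V. hcomult H v \<in> Wn k}" by (simp add: smul_V hcomult_smul closedsp_smul[OF closedsp_Wn])
  qed
  have S: "hanti H ` Hf (Suc k) \<subseteq> Hf (Suc k)"
  proof
    fix y assume "y \<in> hanti H ` Hf (Suc k)"
    then obtain x where x: "x \<in> V" "hcomult H x \<in> Wn k" "y = hanti H x" using eq by auto
    have "hcomult H y = tmap (hanti H) (hanti H) (hcomult H x)" using x by (simp add: S_comult)
    also have "\<dots> \<in> Wn k" by (rule tm[OF bexp_hanti bexp_hanti hantiV HS S_C0 hantiV x(2)])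
    finally show "y \<in> Hf (Suc k)" using eq x hanti_V by auto
  qed
  have L: "adL.adv (bvec l) ` Hf (Suc k) \<subseteq> Hf (Suc k)" if l: "l<d" for l
  proof
    fix y assume "y \<in> adL.adv (bvec l) ` Hf (Suc k)"
    then obtain x where x: "x \<in> V" "hcomult H x \<in> Wn k" "y = adL.adv (bvec l) x" using eq by auto
    have "hcomult H y = vsum (\<lambda>(i,j). smul (D l i j) (tmap (adL.adv (bvec i)) (adL.adv (bvec j)) (hcomult H x))) ({..<d}\<times>{..<d})"
      using x l by (simp add: adL.adv_comult)
    also have "\<dots> \<in> Wn k"
    proof (rule closedsp_vsum[OF closedsp_Wn], simp, clarify)
      fix i j assume ij: "i < d" "j < d"
      have "tmap (adL.adv (bvec i)) (adL.adv (bvec j)) (hcomult H x) \<in> Wn k"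
        by (rule tm[OF adL.bexp_adv[OF ij(1)] adL.bexp_adv[OF ij(2)] _ HL[OF ij(2)] adL_C0[OF ij(1)] _ x(2)])
           (auto simp: adL.adv_V)
      then show "smul (D l i j) (tmap (adL.adv (bvec i)) (adL.adv (bvec j)) (hcomult H x)) \<in> Wn k"
        by (rule closedsp_smul[OF closedsp_Wn])
    qed
    finally show "y \<in> Hf (Suc k)" using eq x adL.adv_V by auto
  qed
  have R: "adR.adv (bvec l) ` Hf (Suc k) \<subseteq> Hf (Suc k)" if l: "l<d" for l
  proof
    fix y assume "y \<in> adR.adv (bvec l) ` Hf (Suc k)"
    then obtain x where x: "x \<in> V" "hcomult H x \<in> Wn k" "y = adR.adv (bvec l) x" using eq by auto
    have "hcomult H y = vsum (\<lambda>(i,j). smul (D l i j) (tmap (adR.adv (bvec i)) (adR.adv (bvec j)) (hcomult H x))) ({..<d}\<times>{..<d})"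
      using x l by (simp add: adR.adv_comult)
    also have "\<dots> \<in> Wn k"
    proof (rule closedsp_vsum[OF closedsp_Wn], simp, clarify)
      fix i j assume ij: "i < d" "j < d"
      have "tmap (adR.adv (bvec i)) (adR.adv (bvec j)) (hcomult H x) \<in> Wn k"
        by (rule tm[OF adR.bexp_adv[OF ij(1)] adR.bexp_adv[OF ij(2)] _ HR[OF ij(2)] adR_C0[OF ij(1)] _ x(2)])
           (auto simp: adR.adv_V)
      then show "smul (D l i j) (tmap (adR.adv (bvec i)) (adR.adv (bvec j)) (hcomult H x)) \<in> Wn k"
        by (rule closedsp_smul[OF closedsp_Wn])
    qed
    finally show "y \<in> Hf (Suc k)" using eq x adR.adv_V by auto
  qed
  have rows: "rowf i x \<in> Hf (Suc k)" if x: "x \<in> Hf (Suc k)" and i: "i < d" for x i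
  proof -
    have x': "x \<in> V" "hcomult H x \<in> Wn k" using x eq by auto
    have "hcomult H (rowf i x) = tmap (rowf i) (\<lambda>p. p) (hcomult H x)" using x' i by (simp add: comult_rowf)
    also have "\<dots> \<in> Wn k"
      by (rule tm[OF bexp_rowf[OF i] bexp_id _ idH rowf_C0 idV x'(2)]) (auto simp: rowf_V)
    finally show ?thesis using eq rowf_V by auto
  qed
show ?thesis unfolding FP_def by (simp del: corad_filt.simps add: sub cl S L R rows)
qed

lemma FP_all: "connected_hopf H \<Longrightarrow> FP n"
  by (induction n) (auto intro: FP_0 FP_Suc)

lemma comult_Hf: assumes conn: "connected_hopf H" and x: "x \<in> Hf n"
  shows "hcomult H x \<in> tens_sp (Hf n) (Hf n)"
proof -
  have F: "FP n" by (rule FP_all[OF conn])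
  then have xV: "x \<in> V" and cl: "closedsp (Hf n)" and rows: "\<And>i. i<d \<Longrightarrow> rowf i x \<in> Hf n"
    using x unfolding FP_def by auto
  show ?thesis
  proof (rule tens_sp_rows_cols[OF cl cl])
    show "\<forall>i j. hcomult H x (i,j) \<noteq> 0 \<longrightarrow> i < d \<and> j < d" using hcomult_supp by blast
    show "\<forall>i<d. (\<lambda>j. hcomult H x (i,j)) \<in> Hf n" using rows by (simp add: rowf_def)
    have "(\<lambda>i. hcomult H x (i,j)) = rowf j x" for j
      using cocom xV by (auto simp: rowf_def fun_eq_iff cocommutative_def)
    then show "\<forall>j<d. (\<lambda>i. hcomult H x (i,j)) \<in> Hf n" using rows by simp
  qed
qed

end


context hopfc
begin

lemma subalg_iff: "subalgebra_of H K \<longleftrightarrow> K \<subseteq> V \<and> closedsp K \<and> u \<in> K \<and> (\<forall>v\<in>K. \<forall>w\<in>K. hmult H v w \<in> K)"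
  by (auto simp: subalgebra_of_def subspace_iff)

lemma tmult_sp: assumes KV: "K \<subseteq> V" and Km: "\<And>a b. a\<in>K \<Longrightarrow> b\<in>K \<Longrightarrow> hmult H a b \<in> K"
  and T1: "T1 \<in> tens_sp K K" and T2: "T2 \<in> tens_sp K K"
  shows "tmult H T1 T2 \<in> tens_sp K K"
proof -
  have base: "tmult H (tens_prod a b) T \<in> tens_sp K K" if ab: "a \<in> K" "b \<in> K" and T: "T \<in> tens_sp K K" for a b T
  proof -
    from T have "T \<in> kspan {tens_prod a b | a b. a \<in> K \<and> b \<in> K}" by (simp add: tens_sp_def)
    then show ?thesis
    proof (induction rule: kspan.induct)
      case kspan_zero then show ?case by (simp add: tmult_zvR closedsp_zv[OF closedsp_tens_sp])
    next
      case (kspan_base v)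
      then obtain c e where v: "v = tens_prod c e" "c \<in> K" "e \<in> K" by blast
      then have "tmult H (tens_prod a b) v = tens_prod (hmult H a c) (hmult H b e)"
        using ab KV by (auto intro: tmult_tp)
      then show ?case using v ab Km by (auto intro: tens_sp_base)
    next
      case (kspan_add v w) then show ?case by (simp add: tmult_addR closedsp_add[OF closedsp_tens_sp])
    next
      case (kspan_smul v c) then show ?case by (simp add: tmult_smulR closedsp_smul[OF closedsp_tens_sp])
    qed
  qed
  from T1 have "T1 \<in> kspan {tens_prod a b | a b. a \<in> K \<and> b \<in> K}" by (simp add: tens_sp_def)
  then show ?thesis
  proof (induction rule: kspan.induct)
    case kspan_zero then show ?case by (simp add: tmult_zvL closedsp_zv[OF closedsp_tens_sp])
  next
    case (kspan_base v) then show ?case using base T2 by blast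
  next
    case (kspan_add v w) then show ?case by (simp add: tmult_addL closedsp_add[OF closedsp_tens_sp])
  next
    case (kspan_smul v c) then show ?case by (simp add: tmult_smulL closedsp_smul[OF closedsp_tens_sp])
  qed
qed

lemma normal_K:
  assumes Ksub: "subalgebra_of H K" and XV: "X \<subseteq> V" and XK: "X \<subseteq> K"
    and min: "\<And>A. subalgebra_of H A \<Longrightarrow> X \<subseteq> A \<Longrightarrow> K \<subseteq> A"
    and cop: "\<And>x. x \<in> X \<Longrightarrow> hcomult H x \<in> tens_sp K K"
    and ant: "\<And>x. x \<in> X \<Longrightarrow> hanti H x \<in> K"
    and adl: "\<And>l x. l < d \<Longrightarrow> x \<in> X \<Longrightarrow> adL.adv (bvec l) x \<in> K"
    and adr: "\<And>l x. l < d \<Longrightarrow> x \<in> X \<Longrightarrow> adR.adv (bvec l) x \<in> K"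
  shows "normal_hopf_subalgebra H K"
proof -
  have KV: "K \<subseteq> V" and Kcl: "closedsp K" and uK: "u \<in> K" and Km: "\<And>v w. v\<in>K \<Longrightarrow> w\<in>K \<Longrightarrow> hmult H v w \<in> K"
    using Ksub by (auto simp: subalg_iff)
  have A1: "subalgebra_of H {x\<in>V. hcomult H x \<in> tens_sp K K}"
    unfolding subalg_iff
  proof (intro conjI)
    show "closedsp {x\<in>V. hcomult H x \<in> tens_sp K K}"
      by (rule closedspI) (auto simp: zv_V addv_V smul_V hcomult_zv hcomult_add hcomult_smul
          closedsp_zv[OF closedsp_tens_sp] closedsp_add[OF closedsp_tens_sp] closedsp_smul[OF closedsp_tens_sp])
    show "u \<in> {x\<in>V. hcomult H x \<in> tens_sp K K}" using u_V uK by (simp add: ax_du tens_sp_base)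
    show "\<forall>v\<in>{x\<in>V. hcomult H x \<in> tens_sp K K}. \<forall>w\<in>{x\<in>V. hcomult H x \<in> tens_sp K K}. hmult H v w \<in> {x\<in>V. hcomult H x \<in> tens_sp K K}"
      using KV Km by (auto simp: hmult_V ax_dm intro!: tmult_sp)
  qed auto
  have K1: "K \<subseteq> {x\<in>V. hcomult H x \<in> tens_sp K K}" by (rule min[OF A1]) (use XV cop in auto)
  have A2: "subalgebra_of H {x\<in>V. hanti H x \<in> K}"
    unfolding subalg_iff
  proof (intro conjI)
    show "closedsp {x\<in>V. hanti H x \<in> K}"
      by (rule closedspI) (auto simp: zv_V addv_V smul_V hanti_zv hanti_add hanti_smul
          closedsp_zv[OF Kcl] closedsp_add[OF Kcl] closedsp_smul[OF Kcl])
    show "u \<in> {x\<in>V. hanti H x \<in> K}" using u_V uK by (simp add: S_unit)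
    show "\<forall>v\<in>{x\<in>V. hanti H x \<in> K}. \<forall>w\<in>{x\<in>V. hanti H x \<in> K}. hmult H v w \<in> {x\<in>V. hanti H x \<in> K}"
      using Km by (auto simp: hmult_V S_mult)
  qed auto
  have K2: "K \<subseteq> {x\<in>V. hanti H x \<in> K}" by (rule min[OF A2]) (use XV ant in auto)
  have A3: "subalgebra_of H {x\<in>V. \<forall>l<d. adL.adv (bvec l) x \<in> K}"
    unfolding subalg_iff
  proof (intro conjI)
    show "closedsp {x\<in>V. \<forall>l<d. adL.adv (bvec l) x \<in> K}"
      by (rule closedspI) (auto simp: zv_V addv_V smul_V adL.adv_zv adL.adv_add adL.adv_smul
          closedsp_zv[OF Kcl] closedsp_add[OF Kcl] closedsp_smul[OF Kcl])
    show "u \<in> {x\<in>V. \<forall>l<d. adL.adv (bvec l) x \<in> K}"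
      using u_V uK by (simp add: adL.adv_unit closedsp_smul[OF Kcl])
    show "\<forall>v\<in>{x\<in>V. \<forall>l<d. adL.adv (bvec l) x \<in> K}. \<forall>w\<in>{x\<in>V. \<forall>l<d. adL.adv (bvec l) x \<in> K}. hmult H v w \<in> {x\<in>V. \<forall>l<d. adL.adv (bvec l) x \<in> K}"
    proof (intro ballI, simp add: hmult_V, intro allI impI)
      fix v w l assume v: "v \<in> V \<and> (\<forall>l<d. adL.adv (bvec l) v \<in> K)" and w: "w \<in> V \<and> (\<forall>l<d. adL.adv (bvec l) w \<in> K)" and l: "l < d"
      show "adL.adv (bvec l) (hmult H v w) \<in> K"
        unfolding adL.adv_mult[OF l]
        by (rule closedsp_vsum[OF Kcl]) (use v w Km in \<open>auto intro!: closedsp_smul[OF Kcl]\<close>)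
    qed
  qed auto
  have K3: "K \<subseteq> {x\<in>V. \<forall>l<d. adL.adv (bvec l) x \<in> K}" by (rule min[OF A3]) (use XV adl in auto)
  have A4: "subalgebra_of H {x\<in>V. \<forall>l<d. adR.adv (bvec l) x \<in> K}"
    unfolding subalg_iff
  proof (intro conjI)
    show "closedsp {x\<in>V. \<forall>l<d. adR.adv (bvec l) x \<in> K}"
      by (rule closedspI) (auto simp: zv_V addv_V smul_V adR.adv_zv adR.adv_add adR.adv_smul
          closedsp_zv[OF Kcl] closedsp_add[OF Kcl] closedsp_smul[OF Kcl])
    show "u \<in> {x\<in>V. \<forall>l<d. adR.adv (bvec l) x \<in> K}"
      using u_V uK by (simp add: adR.adv_unit closedsp_smul[OF Kcl])
    show "\<forall>v\<in>{x\<in>V. \<forall>l<d. adR.adv (bvec l) x \<in> K}. \<forall>w\<in>{x\<in>V. \<forall>l<d. adR.adv (bvec l) x \<in> K}. hmult H v w \<in> {x\<in>V. \<forall>l<d. adR.adv (bvec l) x \<in> K}"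
    proof (intro ballI, simp add: hmult_V, intro allI impI)
      fix v w l assume v: "v \<in> V \<and> (\<forall>l<d. adR.adv (bvec l) v \<in> K)" and w: "w \<in> V \<and> (\<forall>l<d. adR.adv (bvec l) w \<in> K)" and l: "l < d"
      show "adR.adv (bvec l) (hmult H v w) \<in> K"
        unfolding adR.adv_mult[OF l]
        by (rule closedsp_vsum[OF Kcl]) (use v w Km in \<open>auto intro!: closedsp_smul[OF Kcl]\<close>)
    qed
  qed auto
  have K4: "K \<subseteq> {x\<in>V. \<forall>l<d. adR.adv (bvec l) x \<in> K}" by (rule min[OF A4]) (use XV adr in auto)
  have hs: "hopf_subalgebra H K"
    unfolding hopf_subalgebra_def using Ksub K1 K2 by auto
  have nL: "adL.adv h k \<in> K" if "k \<in> K" "h \<in> V" for k h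
    unfolding adL.adv_h[OF that(2)]
    by (rule closedsp_vsum[OF Kcl]) (use K3 that in \<open>auto intro!: closedsp_smul[OF Kcl]\<close>)
  have nR: "adR.adv h k \<in> K" if "k \<in> K" "h \<in> V" for k h
    unfolding adR.adv_h[OF that(2)]
    by (rule closedsp_vsum[OF Kcl]) (use K4 that in \<open>auto intro!: closedsp_smul[OF Kcl]\<close>)
  show ?thesis
    unfolding normal_hopf_subalgebra_def using hs nL nR by (simp add: adL_eq[symmetric] adR_eq[symmetric])
qed

end


context hopfc
begin

lemma V_subalg: "subalgebra_of H V"
  by (simp add: subalg_iff closedsp_V u_V hmult_V)

lemma gen_subalg_props: assumes XV: "X \<subseteq> V"
  shows "subalgebra_of H (gen_subalg H X)" "X \<subseteq> gen_subalg H X"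
    "\<And>A. subalgebra_of H A \<Longrightarrow> X \<subseteq> A \<Longrightarrow> gen_subalg H X \<subseteq> A"
proof -
  let ?F = "{A. subalgebra_of H A \<and> X \<subseteq> A}"
  have VF: "V \<in> ?F" using V_subalg XV by simp
  show "X \<subseteq> gen_subalg H X" by (auto simp: gen_subalg_def)
  show "\<And>A. subalgebra_of H A \<Longrightarrow> X \<subseteq> A \<Longrightarrow> gen_subalg H X \<subseteq> A" by (auto simp: gen_subalg_def)
  show "subalgebra_of H (gen_subalg H X)"
    unfolding gen_subalg_def
  proof (subst subalg_iff, intro conjI)
    show "\<Inter> ?F \<subseteq> V" using VF by blast
    show "closedsp (\<Inter> ?F)"
      by (rule closedspI) (auto simp: subalg_iff intro: closedsp_zv closedsp_add closedsp_smul)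
    show "u \<in> \<Inter> ?F" by (auto simp: subalg_iff)
    show "\<forall>v\<in>\<Inter> ?F. \<forall>w\<in>\<Inter> ?F. hmult H v w \<in> \<Inter> ?F" by (auto simp: subalg_iff)
  qed
qed

lemma normal_Hf: assumes conn: "connected_hopf H"
  shows "normal_hopf_subalgebra H (gen_subalg H (Hf n))"
proof -
  have F: "FP n" by (rule FP_all[OF conn])
  then have HV: "Hf n \<subseteq> V" and HS: "hanti H ` Hf n \<subseteq> Hf n"
    and HL: "\<And>l. l<d \<Longrightarrow> adL.adv (bvec l) ` Hf n \<subseteq> Hf n"
    and HR: "\<And>l. l<d \<Longrightarrow> adR.adv (bvec l) ` Hf n \<subseteq> Hf n"
    unfolding FP_def by auto
  note G = gen_subalg_props[OF HV]
  show ?thesis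
  proof (rule normal_K[OF G(1) HV G(2) G(3)])
    fix x assume x: "x \<in> Hf n"
    show "hcomult H x \<in> tens_sp (gen_subalg H (Hf n)) (gen_subalg H (Hf n))"
      using comult_Hf[OF conn x] tens_sp_mono[OF G(2) G(2)] by blast
    show "hanti H x \<in> gen_subalg H (Hf n)" using HS x G(2) by blast
  next
    fix l x assume "l < d" "x \<in> Hf n"
    then show "adL.adv (bvec l) x \<in> gen_subalg H (Hf n)" "adR.adv (bvec l) x \<in> gen_subalg H (Hf n)"
      using HL HR G(2) by blast+
  qed auto
qed

lemma kspan_u: "kspan {u} = C0"
proof
  show "kspan {u} \<subseteq> C0" by (rule kspan_least[OF closedsp_C0]) (simp add: u_C0)
  show "C0 \<subseteq> kspan {u}"
  proof
    fix v assume "v \<in> C0"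
    then obtain c where "v = smul c u" by (auto simp: C0_def)
    then show "v \<in> kspan {u}" by (auto intro: kspan.kspan_smul kspan.kspan_base)
  qed
qed

lemma normal_0: "normal_hopf_subalgebra H (kspan {u})"
proof -
  have sub: "subalgebra_of H C0"
    unfolding subalg_iff
  proof (intro conjI)
    show "\<forall>v\<in>C0. \<forall>w\<in>C0. hmult H v w \<in> C0"
    proof (intro ballI)
      fix v w assume "v \<in> C0" "w \<in> C0"
      then obtain a b where "v = smul a u" "w = smul b u" by (auto simp: C0_def)
      then have "hmult H v w = smul (a*b) u"
        using ax_unit[OF u_V] by (simp add: hmult_smulL hmult_smulR smul_smul mult.commute)
      then show "hmult H v w \<in> C0" by (auto simp: C0_def)
    qed
  qed (use C0_V closedsp_C0 u_C0 in auto)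
  show ?thesis unfolding kspan_u
  proof (rule normal_K[OF sub, of "{u}"])
    show "C0 \<subseteq> A" if "subalgebra_of H A" "{u} \<subseteq> A" for A
      unfolding kspan_u[symmetric] by (rule kspan_least) (use that in \<open>auto simp: subalg_iff\<close>)
    show "\<And>x. x \<in> {u} \<Longrightarrow> hcomult H x \<in> tens_sp C0 C0"
      by (simp add: ax_du tens_sp_base u_C0)
    show "\<And>x. x \<in> {u} \<Longrightarrow> hanti H x \<in> C0" by (simp add: S_unit u_C0)
    show "\<And>l x. l < d \<Longrightarrow> x \<in> {u} \<Longrightarrow> adL.adv (bvec l) x \<in> C0"
      by (simp add: adL.adv_unit closedsp_smul[OF closedsp_C0] u_C0)
    show "\<And>l x. l < d \<Longrightarrow> x \<in> {u} \<Longrightarrow> adR.adv (bvec l) x \<in> C0"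
      by (simp add: adR.adv_unit closedsp_smul[OF closedsp_C0] u_C0)
  qed (use u_V u_C0 in auto)
qed

end

theorem corollary4p6:
  fixes H :: "'k::alg_closed_field hopf"
  assumes "CHAR('k) > 0"
    and "hopf_algebra H"
    and "cocommutative H"
    and "connected_hopf H"
  shows "\<forall>n. normal_hopf_subalgebra H (upper_power H n)"
proof
  fix n
  interpret hopfc H using assms(2,3) by unfold_locales
  show "normal_hopf_subalgebra H (upper_power H n)"
  proof (cases "n = 0")
    case True then show ?thesis by (simp add: upper_power_def normal_0)
  next
    case False then show ?thesis by (simp add: upper_power_def normal_Hf[OF assms(4)])
  qed
qed


end
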